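(* Under the assumptions that: $\phi(\theta,y)$ is three times continuously differentiable in $\theta$ with third derivatives locally (near $\theta_0$) dominated by an $f^*$-integrable function; $\psi(g^\theta,y)$ is twice continuously differentiable in $\theta$ with second derivatives locally dominated by an $f^*$-integrable function; $\theta_0=\arg\min\Phi_\infty$ is interior with $\mathrm E_*\{\partial^2\phi(\theta_0,Y)/\partial\theta\partial\theta^T\}$ positive definite; $\hat\theta$ and all $\hat\theta_{-i}$ exist, are interior, and satisfy $\hat\theta-\theta_0=O_p(n^{-1/2})$, $\max_i\|\hat\theta_{-i}-\theta_0\|=O_p(n^{-1/2})$; and $\max_i\|\partial\phi(\hat\theta,Y_i)/\partial\theta\|$, $\max_i\|\partial\psi(g^{\hat\theta},Y_i)/\partial\theta\|$ are $O_p(1)$, the leave-one-out crossvalidation criterion satisfies $$\mathrm{CV}(g^{\hat\theta})=\mathrm{UACV}(g^{\hat\theta})+O_p(n^{-2}),\qquad \mathrm{UACV}(g^{\hat\theta})=\Psi(g^{\hat\theta})+\mathrm{Trace}\big(H_{\Phi_{\bar{\mathcal O}_n}}^{-1}K\big),$$ where $\Psi(g^{\hat\theta})=n^{-1}\sum_{i=1}^n\psi(g^{\hat\theta},Y_i)$, $K=n^{-1}\sum_{i=1}^n\hat v_i\hat d_i^T$, $\hat v_i=\frac{\partial\psi(g^\theta,Y_i)}{\partial\theta}\big|_{\hat\theta}$, $\hat d_i=\frac{1}{n-1}\frac{\partial\phi(\theta,Y_i)}{\partial\theta}\big|_{\hat\theta}$, and $H_{\Phi_{\bar{\mathcal O}_n}}=\frac{\partial^2\Phi_{\bar{\mathcal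 O}_n}}{\partial\theta\partial\theta^T}\big|_{\hat\theta}$.
   Context: $Y_1,\dots,Y_n$ i.i.d. with true density $f^*$; $\mathrm E_*$ denotes expectation under $f^*$. $(g^\theta)_{\theta\in\Theta}$, $\Theta\subset\mathbb R^p$, is a parametric family of densities. The estimating function is $\Phi_{\bar{\mathcal O}_n}(\theta)=n^{-1}\sum_{i=1}^n\phi(\theta,Y_i)$, $\hat\theta=\arg\min_\theta\Phi_{\bar{\mathcal O}_n}$, $\Phi_\infty(\theta)=\mathrm E_*\{\phi(\theta,Y)\}$; $\Phi_{\bar{\mathcal O}_{n|i}}(\theta)=\frac{1}{n-1}\sum_{j\neq i}\phi(\theta,Y_j)$ and $\hat\theta_{-i}=\arg\min_\theta\Phi_{\bar{\mathcal O}_{n|i}}$. The assessment loss is $\psi(g^\theta,y)$, and $\mathrm{CV}(g^{\hat\theta})=n^{-1}\sum_{i=1}^n\psi(g^{\hat\theta_{-i}},Y_i)$ is the leave-one-out crossvalidation criterion. *)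

theory Defs
  imports "HOL-Probability.Probability"
begin

text \<open>Stochastic boundedness, stated with inner probability so that no
measurability of the random quantities is required:
X n = O_p(r n) iff for every e > 0 there are K and N such that for all n \<ge> N
there is an event of probability at least 1 - e on which |X n| \<le> K * r n.\<close>
definition bigOp :: "'a measure \<Rightarrow> (nat \<Rightarrow> 'a \<Rightarrow> real) \<Rightarrow> (nat \<Rightarrow> real) \<Rightarrow> bool" where
  "bigOp M X r \<longleftrightarrow>
     (\<forall>e>0. \<exists>K N. \<forall>n\<ge>N. \<exists>A\<in>sets M. measure M A \<ge> 1 - e \<and>
        (\<forall>\<omega>\<in>A. \<bar>X n \<omega>\<bar> \<le> K * r n))"

definition PhiEmp :: "('p \<Rightarrow> 'y \<Rightarrow> real) \<Rightarrow> (nat \<Rightarrow> 'a \<Rightarrow> 'y) \<Rightarrow> nat \<Rightarrow> 'a \<Rightarrow> 'p \<Rightarrow> real" where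
  "PhiEmp phi Y n \<omega> \<theta> = (1 / real n) * (\<Sum>i<n. phi \<theta> (Y i \<omega>))"

definition PhiLoo :: "('p \<Rightarrow> 'y \<Rightarrow> real) \<Rightarrow> (nat \<Rightarrow> 'a \<Rightarrow> 'y) \<Rightarrow> nat \<Rightarrow> nat \<Rightarrow> 'a \<Rightarrow> 'p \<Rightarrow> real" where
  "PhiLoo phi Y n i \<omega> \<theta> = (1 / (real n - 1)) * (\<Sum>j\<in>{..<n} - {i}. phi \<theta> (Y j \<omega>))"

definition CV :: "(('y \<Rightarrow> real) \<Rightarrow> 'y \<Rightarrow> real) \<Rightarrow> ('p \<Rightarrow> 'y \<Rightarrow> real) \<Rightarrow> (nat \<Rightarrow> 'a \<Rightarrow> 'y)
                 \<Rightarrow> (nat \<Rightarrow> nat \<Rightarrow> 'a \<Rightarrow> 'p) \<Rightarrow> nat \<Rightarrow> 'a \<Rightarrow> real" where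
  "CV psi g Y loo n \<omega> = (1 / real n) * (\<Sum>i<n. psi (g (loo n i \<omega>)) (Y i \<omega>))"

text \<open>UACV(g^{hat theta}) = Psi(g^{hat theta}) + Trace(H^{-1} K), where
 Dphi / Hphi are the gradient / Hessian of phi in theta and Dpsi the gradient
 of theta \<mapsto> psi(g^theta, y).\<close>
definition UACV :: "(('y \<Rightarrow> real) \<Rightarrow> 'y \<Rightarrow> real) \<Rightarrow> (real^'p::finite \<Rightarrow> 'y \<Rightarrow> real)
     \<Rightarrow> (real^'p \<Rightarrow> 'y \<Rightarrow> real^'p) \<Rightarrow> (real^'p \<Rightarrow> 'y \<Rightarrow> real^'p)
     \<Rightarrow> (real^'p \<Rightarrow> 'y \<Rightarrow> real^'p^'p)
     \<Rightarrow> (nat \<Rightarrow> 'a \<Rightarrow> 'y) \<Rightarrow> (nat \<Rightarrow> 'a \<Rightarrow> real^'p) \<Rightarrow> nat \<Rightarrow> 'a \<Rightarrow> real" where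
  "UACV psi g Dpsi Dphi Hphi Y hat n \<omega> =
    (let th = hat n \<omega>;
         Psi = (1 / real n) * (\<Sum>i<n. psi (g th) (Y i \<omega>));
         v = (\<lambda>i. Dpsi th (Y i \<omega>));
         d = (\<lambda>i. (1 / (real n - 1)) *\<^sub>R Dphi th (Y i \<omega>));
         K = (\<chi> a b. (1 / real n) * (\<Sum>i<n. v i $ a * d i $ b));
         H = (1 / real n) *\<^sub>R (\<Sum>i<n. Hphi th (Y i \<omega>))
     in Psi + trace (matrix_inv H ** K))"

end

theory Submission
  imports Defs
begin

definition hpe :: "'a measure \<Rightarrow> real \<Rightarrow> (nat \<Rightarrow> 'a \<Rightarrow> bool) \<Rightarrow> bool" where
  "hpe M e P \<longleftrightarrow> (\<exists>N. \<forall>n\<ge>N. \<exists>A\<in>sets M. measure M A \<ge> 1 - e \<and> (\<forall>\<omega>\<in>A. P n \<omega>))"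

lemma hpe_conj:
  assumes "prob_space M" "hpe M e1 P" "hpe M e2 Q"
  shows "hpe M (e1 + e2) (\<lambda>n \<omega>. P n \<omega> \<and> Q n \<omega>)"
proof -
  interpret prob_space M by fact
  obtain N1 where N1: "\<forall>n\<ge>N1. \<exists>A\<in>sets M. measure M A \<ge> 1 - e1 \<and> (\<forall>\<omega>\<in>A. P n \<omega>)"
    using assms(2) unfolding hpe_def by blast
  obtain N2 where N2: "\<forall>n\<ge>N2. \<exists>A\<in>sets M. measure M A \<ge> 1 - e2 \<and> (\<forall>\<omega>\<in>A. Q n \<omega>)"
    using assms(3) unfolding hpe_def by blast
  show ?thesis unfolding hpe_def
  proof (intro exI allI impI)
    fix n assume n: "max N1 N2 \<le> n"
    obtain A where A: "A \<in> sets M" "measure M A \<ge> 1 - e1" "\<forall>\<omega>\<in>A. P n \<omega>" using N1 n by auto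
    obtain B where B: "B \<in> sets M" "measure M B \<ge> 1 - e2" "\<forall>\<omega>\<in>B. Q n \<omega>" using N2 n by auto
    have "measure M (A \<union> B) = measure M A + measure M B - measure M (A \<inter> B)"
      using A B by (intro measure_Un3) (auto simp: fmeasurable_def less_top[symmetric])
    moreover have "measure M (A \<union> B) \<le> 1" by simp
    ultimately have "measure M (A \<inter> B) \<ge> 1 - (e1 + e2)" using A B by linarith
    then show "\<exists>C\<in>sets M. measure M C \<ge> 1 - (e1 + e2) \<and> (\<forall>\<omega>\<in>C. P n \<omega> \<and> Q n \<omega>)"
      using A B by (intro bexI[of _ "A \<inter> B"]) auto
  qed
qed

lemma hpe_mono:
  assumes "hpe M e P" "e \<le> e'"
    and "\<And>n \<omega>. n \<ge> N0 \<Longrightarrow> \<omega> \<in> space M \<Longrightarrow> P n \<omega> \<Longrightarrow> Q n \<omega>"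
  shows "hpe M e' Q"
proof -
  obtain N where N: "\<forall>n\<ge>N. \<exists>A\<in>sets M. measure M A \<ge> 1 - e \<and> (\<forall>\<omega>\<in>A. P n \<omega>)"
    using assms(1) unfolding hpe_def by blast
  show ?thesis unfolding hpe_def
  proof (intro exI allI impI)
    fix n assume n: "max N N0 \<le> n"
    obtain A where A: "A \<in> sets M" "measure M A \<ge> 1 - e" "\<forall>\<omega>\<in>A. P n \<omega>" using N n by auto
    have "A \<subseteq> space M" using A(1) sets.sets_into_space by blast
    then show "\<exists>A\<in>sets M. measure M A \<ge> 1 - e' \<and> (\<forall>\<omega>\<in>A. Q n \<omega>)"
      using A n assms(2,3) by (intro bexI[of _ A]) auto
  qed
qed

lemma hpe_true: "prob_space M \<Longrightarrow> hpe M 0 (\<lambda>n \<omega>. True)"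
  unfolding hpe_def by (intro exI[of _ 0] allI impI bexI[of _ "space M"]) (auto simp: prob_space.prob_space)

lemma bigOp_hpe:
  assumes "bigOp M X r" "e > 0"
  shows "\<exists>K. hpe M e (\<lambda>n \<omega>. \<bar>X n \<omega>\<bar> \<le> K * r n)"
  using assms unfolding bigOp_def hpe_def by blast

lemma hpe_bigOp:
  assumes "\<And>e. e > 0 \<Longrightarrow> \<exists>K. hpe M e (\<lambda>n \<omega>. \<bar>X n \<omega>\<bar> \<le> K * r n)"
  shows "bigOp M X r"
  using assms unfolding bigOp_def hpe_def by blast

lemma transfer_meas:
  assumes Ym: "Y \<in> measurable M S" and d: "distr M S Y = D" and f: "f \<in> borel_measurable D"
  shows "f \<in> borel_measurable S"
proof -
  have "sets D = sets S" using d[symmetric] by simp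
  then show ?thesis using f measurable_cong_sets by blast
qed

lemma transfer_int:
  assumes Ym: "Y \<in> measurable M S" and d: "distr M S Y = D" and f: "integrable D f"
  shows "integrable M (\<lambda>\<omega>. f (Y \<omega>) :: real)" "(\<integral>\<omega>. f (Y \<omega>) \<partial>M) = integral\<^sup>L D f"
proof -
  have fm: "f \<in> borel_measurable S" using transfer_meas[OF Ym d] f by blast
  show "integrable M (\<lambda>\<omega>. f (Y \<omega>))" using f integrable_distr_eq[OF Ym fm] d by simp
  show "(\<integral>\<omega>. f (Y \<omega>) \<partial>M) = integral\<^sup>L D f" using integral_distr[OF Ym fm] d by simp
qed

lemma transfer_measure:
  assumes Ym: "Y \<in> measurable M S" and d: "distr M S Y = D" and f: "f \<in> borel_measurable S"
  shows "measure M {\<omega>\<in>space M. f (Y \<omega>) \<ge> (t::real)} = measure D {y\<in>space D. f y \<ge> t}"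
proof -
  have sD: "space D = space S" using d[symmetric] by simp
  have A: "{y\<in>space S. f y \<ge> t} \<in> sets S" using f by measurable
  have "measure D {y\<in>space D. f y \<ge> t} = measure M (Y -` {y\<in>space S. f y \<ge> t} \<inter> space M)"
    unfolding sD using measure_distr[OF Ym A] d by simp
  also have "Y -` {y\<in>space S. f y \<ge> t} \<inter> space M = {\<omega>\<in>space M. f (Y \<omega>) \<ge> t}"
    using measurable_space[OF Ym] by auto
  finally show ?thesis by simp
qed

lemma avg_markov:
  assumes P: "prob_space M" and Ym: "\<And>i. Y i \<in> measurable M S" and d: "\<And>i. distr M S (Y i) = D"
    and f: "integrable D f" and fpos: "\<And>y. y \<in> space S \<Longrightarrow> f y \<ge> 0" and e: "e > 0"
  shows "\<exists>K. hpe M e (\<lambda>n \<omega>. (1 / real n) * (\<Sum>i<n. f (Y i \<omega>)) \<le> K)"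
proof -
  interpret prob_space M by fact
  define \<mu> where "\<mu> = integral\<^sup>L D f"
  have sD: "space D = space S" using d[of 0, symmetric] by simp
  have mu0: "\<mu> \<ge> 0" unfolding \<mu>_def using fpos sD by (intro integral_nonneg_AE) auto
  define K where "K = (\<mu> + 1) / e"
  have K0: "K > 0" unfolding K_def using mu0 e by auto
  have "\<forall>n\<ge>1. \<exists>A\<in>sets M. measure M A \<ge> 1 - e \<and> (\<forall>\<omega>\<in>A. (1 / real n) * (\<Sum>i<n. f (Y i \<omega>)) \<le> K)"
  proof (intro allI impI)
    fix n :: nat assume n: "n \<ge> 1"
    define X where "X \<omega> = (1 / real n) * (\<Sum>i<n. f (Y i \<omega>))" for \<omega>
    have intX: "integrable M X" unfolding X_def
      using transfer_int(1)[OF Ym d f] by auto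
    have EX: "(\<integral>\<omega>. X \<omega> \<partial>M) = \<mu>"
    proof -
      have "(\<integral>\<omega>. X \<omega> \<partial>M) = (1 / real n) * (\<Sum>i<n. \<integral>\<omega>. f (Y i \<omega>) \<partial>M)"
        unfolding X_def using transfer_int(1)[OF Ym d f] by (simp add: integral_sum)
      also have "\<dots> = \<mu>" using transfer_int(2)[OF Ym d f] n unfolding \<mu>_def by simp
      finally show ?thesis .
    qed
    have Xpos: "AE \<omega> in M. 0 \<le> X \<omega>" unfolding X_def
      using fpos measurable_space[OF Ym] by (intro AE_I2 mult_nonneg_nonneg sum_nonneg) auto
    have mk: "measure M {\<omega>\<in>space M. X \<omega> \<ge> K} \<le> \<mu> / K"
      using integral_Markov_inequality_measure[OF intX sets.top Xpos K0] EX by simp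
    have "\<mu> / K \<le> e" unfolding K_def using e mu0 by (simp add: field_simps)
    define A where "A = space M - {\<omega>\<in>space M. X \<omega> \<ge> K}"
    have Xm: "X \<in> borel_measurable M" using intX by auto
    have Aev: "A \<in> sets M" unfolding A_def using Xm by measurable
    have "measure M A = 1 - measure M {\<omega>\<in>space M. X \<omega> \<ge> K}"
      unfolding A_def using Xm by (intro prob_compl) measurable
    then have "measure M A \<ge> 1 - e" using mk \<open>\<mu> / K \<le> e\<close> by linarith
    moreover have "\<forall>\<omega>\<in>A. X \<omega> \<le> K" unfolding A_def by auto
    ultimately show "\<exists>A\<in>sets M. measure M A \<ge> 1 - e \<and> (\<forall>\<omega>\<in>A. (1 / real n) * (\<Sum>i<n. f (Y i \<omega>)) \<le> K)"
      using Aev unfolding X_def by blast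
  qed
  then show ?thesis unfolding hpe_def by blast
qed

lemma tail_lim:
  assumes f: "integrable D (f :: _ \<Rightarrow> real)" and c: "c > 0"
  shows "(\<lambda>n. \<integral>y. \<bar>f y\<bar> * indicator {y\<in>space D. \<bar>f y\<bar> \<ge> c * real n} y \<partial>D) \<longlonglongrightarrow> 0"
proof -
  have fm[measurable]: "f \<in> borel_measurable D" using f by auto
  have "(\<lambda>n. \<integral>y. \<bar>f y\<bar> * indicator {y\<in>space D. \<bar>f y\<bar> \<ge> c * real n} y \<partial>D) \<longlonglongrightarrow> integral\<^sup>L D (\<lambda>y. 0)"
  proof (rule integral_dominated_convergence[where w="\<lambda>y. \<bar>f y\<bar>"])
    show "(\<lambda>y. 0::real) \<in> borel_measurable D" by simp
    show "\<And>i. (\<lambda>y. \<bar>f y\<bar> * indicator {y\<in>space D. \<bar>f y\<bar> \<ge> c * real i} y) \<in> borel_measurable D"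
      by measurable
    show "integrable D (\<lambda>y. \<bar>f y\<bar>)" using f by auto
    show "AE y in D. (\<lambda>i. \<bar>f y\<bar> * indicator {y\<in>space D. \<bar>f y\<bar> \<ge> c * real i} y) \<longlonglongrightarrow> 0"
    proof (rule AE_I2)
      fix y assume y: "y \<in> space D"
      obtain N :: nat where N: "\<bar>f y\<bar> / c < real N" using reals_Archimedean2 by blast
      have "\<forall>n\<ge>N. \<bar>f y\<bar> * indicator {y\<in>space D. \<bar>f y\<bar> \<ge> c * real n} y = 0"
      proof (intro allI impI)
        fix n assume "n \<ge> N"
        then have "real N \<le> real n" by simp
        with N c have "\<bar>f y\<bar> < c * real n"
          by (smt (verit, best) divide_less_eq mult.commute mult_left_mono)
        then show "\<bar>f y\<bar> * indicator {y\<in>space D. \<bar>f y\<bar> \<ge> c * real n} y = 0" by (simp add: indicator_def)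
      qed
      then show "(\<lambda>i. \<bar>f y\<bar> * indicator {y\<in>space D. \<bar>f y\<bar> \<ge> c * real i} y) \<longlonglongrightarrow> 0"
        by (intro tendsto_eventually) (auto simp: eventually_sequentially)
    qed
    show "\<And>i. AE y in D. norm (\<bar>f y\<bar> * indicator {y\<in>space D. \<bar>f y\<bar> \<ge> c * real i} y) \<le> \<bar>f y\<bar>"
      by (intro AE_I2) (auto simp: indicator_def)
  qed
  then show ?thesis by simp
qed

lemma measure_tail_bound:
  assumes D: "prob_space D" and f: "integrable D (f :: _ \<Rightarrow> real)" and t: "t > 0"
  shows "measure D {y\<in>space D. f y \<ge> t} \<le> (\<integral>y. \<bar>f y\<bar> * indicator {y\<in>space D. \<bar>f y\<bar> \<ge> t} y \<partial>D) / t"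
proof -
  interpret D: prob_space D by fact
  have fm[measurable]: "f \<in> borel_measurable D" using f by auto
  define u where "u y = \<bar>f y\<bar> * indicator {y\<in>space D. \<bar>f y\<bar> \<ge> t} y" for y
  have um[measurable]: "u \<in> borel_measurable D" unfolding u_def by measurable
  have ui: "integrable D u" unfolding u_def
    by (rule Bochner_Integration.integrable_bound[where f="\<lambda>y. \<bar>f y\<bar>"]) (use f in \<open>auto simp: indicator_def\<close>)
  have "measure D {y\<in>space D. f y \<ge> t} \<le> measure D {y\<in>space D. u y \<ge> t}"
    by (intro D.finite_measure_mono) (auto simp: u_def indicator_def)
  also have "\<dots> \<le> integral\<^sup>L D u / t"
    by (rule integral_Markov_inequality_measure[OF ui sets.top _ t]) (auto simp: u_def)
  finally show ?thesis unfolding u_def .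
qed

lemma max_small:
  assumes P: "prob_space M" and Ym: "\<And>i. Y i \<in> measurable M S" and d: "\<And>i. distr M S (Y i) = D"
    and f: "integrable D f" and fpos: "\<And>y. y \<in> space S \<Longrightarrow> f y \<ge> 0" and eta: "\<eta> > 0" and e: "e > 0"
  shows "hpe M e (\<lambda>n \<omega>. \<forall>i<n. f (Y i \<omega>) \<le> \<eta> * real n)"
proof -
  interpret prob_space M by fact
  have D: "prob_space D" using d[of 0] prob_space_distr[OF Ym[of 0]] by simp
  interpret D: prob_space D by fact
  have sD: "space D = space S" using d[of 0, symmetric] by simp
  have fm: "f \<in> borel_measurable S" using transfer_meas[OF Ym d] f by blast
  define T where "T n = (\<integral>y. \<bar>f y\<bar> * indicator {y\<in>space D. \<bar>f y\<bar> \<ge> \<eta> * real n} y \<partial>D)" for n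
  have "T \<longlonglongrightarrow> 0" unfolding T_def by (rule tail_lim[OF f eta])
  then obtain N where N: "\<And>n. n \<ge> N \<Longrightarrow> \<bar>T n\<bar> < \<eta> * e"
    using eta e unfolding lim_sequentially dist_real_def by (metis diff_zero mult_pos_pos)
  have "\<forall>n\<ge>max N 1. \<exists>A\<in>sets M. measure M A \<ge> 1 - e \<and> (\<forall>\<omega>\<in>A. \<forall>i<n. f (Y i \<omega>) \<le> \<eta> * real n)"
  proof (intro allI impI)
    fix n assume n: "max N 1 \<le> n"
    define B where "B = (\<Union>i<n. {\<omega>\<in>space M. f (Y i \<omega>) \<ge> \<eta> * real n})"
    have Bi: "\<And>i. {\<omega>\<in>space M. f (Y i \<omega>) \<ge> \<eta> * real n} \<in> sets M"
      using fm Ym by measurable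
    have Bm: "B \<in> sets M" unfolding B_def using Bi by auto
    have "measure M B \<le> (\<Sum>i<n. measure M {\<omega>\<in>space M. f (Y i \<omega>) \<ge> \<eta> * real n})"
      unfolding B_def by (rule measure_UNION_le) (auto intro: Bi)
    also have "\<dots> = real n * measure D {y\<in>space D. f y \<ge> \<eta> * real n}"
      using transfer_measure[OF Ym d fm] by simp
    also have "\<dots> \<le> real n * (T n / (\<eta> * real n))"
      unfolding T_def using n eta
      by (intro mult_left_mono measure_tail_bound[OF D f]) auto
    also have "\<dots> = T n / \<eta>" using n eta by (simp add: field_simps)
    also have "\<dots> \<le> e" using N[of n] n eta by (simp add: divide_le_eq mult.commute)
    finally have mB: "measure M B \<le> e" .
    have "measure M (space M - B) = 1 - measure M B" using Bm by (rule prob_compl)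
    then have "measure M (space M - B) \<ge> 1 - e" using mB by linarith
    moreover have "\<forall>\<omega>\<in>space M - B. \<forall>i<n. f (Y i \<omega>) \<le> \<eta> * real n" unfolding B_def by auto
    ultimately show "\<exists>A\<in>sets M. measure M A \<ge> 1 - e \<and> (\<forall>\<omega>\<in>A. \<forall>i<n. f (Y i \<omega>) \<le> \<eta> * real n)"
      using Bm by blast
  qed
  then show ?thesis unfolding hpe_def by blast
qed

lemma avg_markov_thr:
  assumes P: "prob_space M" and Ym: "\<And>i. Y i \<in> measurable M S" and d: "\<And>i. distr M S (Y i) = D"
    and f: "integrable D f" and fpos: "\<And>y. y \<in> space S \<Longrightarrow> f y \<ge> 0" and c: "c > 0" and n: "n \<ge> 1"
  shows "measure M {\<omega>\<in>space M. (1 / real n) * (\<Sum>i<n. f (Y i \<omega>)) \<ge> c} \<le> integral\<^sup>L D f / c"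
proof -
  interpret prob_space M by fact
  define X where "X \<omega> = (1 / real n) * (\<Sum>i<n. f (Y i \<omega>))" for \<omega>
  have intX: "integrable M X" unfolding X_def
    using transfer_int(1)[OF Ym d f] by auto
  have EX: "(\<integral>\<omega>. X \<omega> \<partial>M) = integral\<^sup>L D f"
  proof -
    have "(\<integral>\<omega>. X \<omega> \<partial>M) = (1 / real n) * (\<Sum>i<n. \<integral>\<omega>. f (Y i \<omega>) \<partial>M)"
      unfolding X_def using transfer_int(1)[OF Ym d f] by (simp add: integral_sum)
    also have "\<dots> = integral\<^sup>L D f" using transfer_int(2)[OF Ym d f] n by simp
    finally show ?thesis .
  qed
  have Xpos: "AE \<omega> in M. 0 \<le> X \<omega>" unfolding X_def
    using fpos measurable_space[OF Ym] by (intro AE_I2 mult_nonneg_nonneg sum_nonneg) auto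
  have m: "measure M {\<omega>\<in>space M. X \<omega> \<ge> c} \<le> (\<integral>\<omega>. X \<omega> \<partial>M) / c"
    by (rule integral_Markov_inequality_measure[OF intX sets.top Xpos c])
  from m[unfolded EX] show ?thesis unfolding X_def .
qed

lemma exp_small:
  assumes c: "c > 0" and e: "e > 0"
  shows "\<exists>N. \<forall>n\<ge>N. exp (- c * real n) \<le> e"
proof -
  obtain N :: nat where N: "1 / (e * c) < real N" using reals_Archimedean2 by blast
  show ?thesis
  proof (intro exI allI impI)
    fix n assume "N \<le> n"
    then have Nn: "real N \<le> real n" by simp
    have "1 + c * real n \<le> exp (c * real n)" by (rule exp_ge_add_one_self)
    have "1 / (e * c) < real n" using N Nn by linarith
    then have "1 < e * c * real n" using e c by (simp add: divide_less_eq mult.commute)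
    then have "1 < c * real n * e" by (simp add: ac_simps)
    then have "1 / e < c * real n" using e by (simp add: pos_divide_less_eq)
    with \<open>1 + c * real n \<le> exp (c * real n)\<close> have lt: "1 / e \<le> exp (c * real n)" by linarith
    have "exp (- c * real n) = inverse (exp (c * real n))" by (simp add: exp_minus)
    also have "\<dots> \<le> inverse (1 / e)"
      using lt e by (intro le_imp_inverse_le) auto
    also have "\<dots> = e" by simp
    finally show "exp (- c * real n) \<le> e" .
  qed
qed

lemma wlln:
  assumes P: "prob_space M" and indep: "prob_space.indep_vars M (\<lambda>_. S) Y UNIV"
    and d: "\<And>i. distr M S (Y i) = D"
    and h: "integrable D h" and eta: "\<eta> > 0" and e: "e > 0"
  shows "hpe M e (\<lambda>n \<omega>. \<bar>(1 / real n) * (\<Sum>i<n. h (Y i \<omega>)) - integral\<^sup>L D h\<bar> \<le> \<eta>)"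
proof -
  interpret prob_space M by fact
  have Ym: "\<And>i. Y i \<in> measurable M S" using indep unfolding indep_vars_def2 by auto
  have D: "prob_space D" using d[of 0] prob_space_distr[OF Ym[of 0]] by simp
  interpret D: prob_space D by fact
  have sD: "space D = space S" using d[of 0, symmetric] by simp
  have hmD[measurable]: "h \<in> borel_measurable D" using h by auto
  have hm[measurable]: "h \<in> borel_measurable S" using transfer_meas[OF Ym d] h by blast
  define e1 where "e1 = min e 1"
  have e1: "e1 > 0" "e1 \<le> e" "e1 \<le> 1" using e unfolding e1_def by auto
  have "(\<lambda>n. \<integral>y. \<bar>h y\<bar> * indicator {y\<in>space D. \<bar>h y\<bar> \<ge> 1 * real n} y \<partial>D) \<longlonglongrightarrow> 0"
    by (rule tail_lim[OF h]) simp
  then obtain N0 where N0: "\<And>n. n \<ge> N0 \<Longrightarrow> \<bar>\<integral>y. \<bar>h y\<bar> * indicator {y\<in>space D. \<bar>h y\<bar> \<ge> 1 * real n} y \<partial>D\<bar> < \<eta> * e1 / 6"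
  proof -
    have "\<eta> * e1 / 6 > 0" using eta e1 by simp
    from LIMSEQ_D[OF \<open>(\<lambda>n. \<integral>y. \<bar>h y\<bar> * indicator {y\<in>space D. \<bar>h y\<bar> \<ge> 1 * real n} y \<partial>D) \<longlonglongrightarrow> 0\<close> this]
    show ?thesis using that by auto
  qed
  define K where "K = real (max N0 1)"
  have K1: "K \<ge> 1" unfolding K_def by simp
  define t where "t y = \<bar>h y\<bar> * indicator {y\<in>space D. \<bar>h y\<bar> \<ge> K} y" for y
  have tm[measurable]: "t \<in> borel_measurable D" unfolding t_def by measurable
  have ti: "integrable D t" unfolding t_def
    by (rule Bochner_Integration.integrable_bound[where f="\<lambda>y. \<bar>h y\<bar>"]) (use h in \<open>auto simp: indicator_def\<close>)
  have tpos: "\<And>y. t y \<ge> 0" unfolding t_def by (simp add: indicator_def)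
  have tau: "integral\<^sup>L D t < \<eta> * e1 / 6"
    using N0[of "max N0 1"] unfolding t_def K_def by simp
  define hk where "hk y = max (-K) (min K (h y))" for y
  have hkm[measurable]: "hk \<in> borel_measurable S" unfolding hk_def by measurable
  have hkmD[measurable]: "hk \<in> borel_measurable D" unfolding hk_def by measurable
  have hkb: "\<And>y. hk y \<in> {-K..K}" unfolding hk_def using K1 by auto
  have hki: "integrable D hk"
    by (rule Bochner_Integration.integrable_bound[where f="\<lambda>y. \<bar>h y\<bar>"]) (use h K1 in \<open>auto simp: hk_def intro!: AE_I2\<close>)
  have diff: "\<And>y. y \<in> space D \<Longrightarrow> \<bar>h y - hk y\<bar> \<le> t y"
    using K1 unfolding hk_def t_def indicator_def by (auto simp: abs_if max_def min_def)
  define \<mu>k where "\<mu>k = integral\<^sup>L D hk"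
  have mudiff: "\<bar>integral\<^sup>L D h - \<mu>k\<bar> \<le> integral\<^sup>L D t"
  proof -
    have "\<bar>integral\<^sup>L D h - \<mu>k\<bar> = \<bar>\<integral>y. h y - hk y \<partial>D\<bar>" unfolding \<mu>k_def using h hki by simp
    also have "\<dots> \<le> (\<integral>y. \<bar>h y - hk y\<bar> \<partial>D)" by (rule integral_abs_bound)
    also have "\<dots> \<le> integral\<^sup>L D t"
      using h hki ti diff by (intro integral_mono) auto
    finally show ?thesis .
  qed
  define c1 where "c1 = \<eta>^2 / (18 * K^2)"
  have c1: "c1 > 0" unfolding c1_def using eta K1 by simp
  obtain N1 where N1: "\<And>n. n \<ge> N1 \<Longrightarrow> exp (- c1 * real n) \<le> e / 4"
    using exp_small[OF c1, of "e/4"] e by auto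
  have "\<forall>n\<ge>max N1 1. \<exists>A\<in>sets M. measure M A \<ge> 1 - e \<and>
          (\<forall>\<omega>\<in>A. \<bar>(1 / real n) * (\<Sum>i<n. h (Y i \<omega>)) - integral\<^sup>L D h\<bar> \<le> \<eta>)"
  proof (intro allI impI)
    fix n assume n: "max N1 1 \<le> n"
    then have n1: "n \<ge> 1" and nN1: "n \<ge> N1" by auto
    interpret H: Hoeffding_ineq M "{..<n}" "\<lambda>i \<omega>. hk (Y i \<omega>)" "\<lambda>_. -K" "\<lambda>_. K" "real n * \<mu>k"
    proof unfold_locales
      show "finite {..<n}" by simp
      show "indep_vars (\<lambda>_. borel) (\<lambda>i \<omega>. hk (Y i \<omega>)) {..<n}"
        by (rule indep_vars_subset[OF indep_vars_compose2[OF indep]]) auto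
      show "\<And>i. i \<in> {..<n} \<Longrightarrow> AE x in M. hk (Y i x) \<in> {- K..K}" using hkb by auto
      show "real n * \<mu>k \<equiv> \<Sum>i\<in>{..<n}. expectation (\<lambda>\<omega>. hk (Y i \<omega>))"
        using transfer_int(2)[OF Ym d hki] unfolding \<mu>k_def by simp
    qed
    define B1 where "B1 = {\<omega>\<in>space M. \<bar>(\<Sum>i\<in>{..<n}. hk (Y i \<omega>)) - real n * \<mu>k\<bar> \<ge> real n * \<eta> / 3}"
    have "measure M B1 \<le> 2 * exp (-2 * (real n * \<eta> / 3)\<^sup>2 / (\<Sum>i\<in>{..<n}. (K - (-K))\<^sup>2))"
      unfolding B1_def using n1 eta K1 by (intro H.Hoeffding_ineq_abs_ge) auto
    also have "-2 * (real n * \<eta> / 3)\<^sup>2 / (\<Sum>i\<in>{..<n}. (K - (-K))\<^sup>2) = - c1 * real n"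
      unfolding c1_def using n1 K1 by (simp add: field_simps power2_eq_square)
    finally have mB1: "measure M B1 \<le> e / 2" using N1[OF nN1] by simp
    define B2 where "B2 = {\<omega>\<in>space M. (1 / real n) * (\<Sum>i<n. t (Y i \<omega>)) \<ge> \<eta> / 3}"
    have tmS: "t \<in> borel_measurable S" using transfer_meas[OF Ym d] ti by blast
    have "measure M B2 \<le> integral\<^sup>L D t / (\<eta> / 3)"
      unfolding B2_def using eta n1 tpos by (intro avg_markov_thr[OF P Ym d ti]) auto
    also have "\<dots> \<le> e / 2"
    proof -
      have "\<eta> * e1 \<le> \<eta> * e" using e1 eta by (intro mult_left_mono) auto
      then have "integral\<^sup>L D t < \<eta> * e / 6" using tau by linarith
      then show ?thesis using eta by (simp add: field_simps)
    qed
    finally have mB2: "measure M B2 \<le> e / 2" .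
    have B1m: "B1 \<in> sets M" unfolding B1_def using Ym by measurable
    have B2m: "B2 \<in> sets M" unfolding B2_def using Ym tmS by measurable
    define A where "A = space M - (B1 \<union> B2)"
    have Am: "A \<in> sets M" unfolding A_def using B1m B2m by auto
    have "measure M (B1 \<union> B2) \<le> measure M B1 + measure M B2" by (rule measure_Un_le) (use B1m B2m in auto)
    then have "measure M A \<ge> 1 - e" unfolding A_def using prob_compl[of "B1 \<union> B2"] B1m B2m mB1 mB2 by auto
    moreover have "\<forall>\<omega>\<in>A. \<bar>(1 / real n) * (\<Sum>i<n. h (Y i \<omega>)) - integral\<^sup>L D h\<bar> \<le> \<eta>"
    proof
      fix \<omega> assume "\<omega> \<in> A"
      then have w: "\<omega> \<in> space M" "\<omega> \<notin> B1" "\<omega> \<notin> B2" unfolding A_def by auto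
      have Yw: "\<And>i. Y i \<omega> \<in> space D" using measurable_space[OF Ym] w(1) sD by auto
      have a1: "\<bar>(\<Sum>i<n. hk (Y i \<omega>)) - real n * \<mu>k\<bar> < real n * \<eta> / 3" using w unfolding B1_def by auto
      have a2: "(1 / real n) * (\<Sum>i<n. t (Y i \<omega>)) < \<eta> / 3" using w unfolding B2_def by auto
      have "\<bar>(\<Sum>i<n. h (Y i \<omega>)) - (\<Sum>i<n. hk (Y i \<omega>))\<bar> \<le> (\<Sum>i<n. t (Y i \<omega>))"
        unfolding sum_subtractf[symmetric] by (rule order_trans[OF sum_abs sum_mono]) (use diff Yw in auto)
      moreover have "real n * \<bar>integral\<^sup>L D h - \<mu>k\<bar> = \<bar>real n * integral\<^sup>L D h - real n * \<mu>k\<bar>"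
        by (simp add: abs_mult flip: right_diff_distrib)
      ultimately have "\<bar>(\<Sum>i<n. h (Y i \<omega>)) - real n * integral\<^sup>L D h\<bar> \<le>
          \<bar>(\<Sum>i<n. hk (Y i \<omega>)) - real n * \<mu>k\<bar> + (\<Sum>i<n. t (Y i \<omega>)) + real n * \<bar>integral\<^sup>L D h - \<mu>k\<bar>"
        by arith
      also have "\<dots> < real n * \<eta> / 3 + real n * (\<eta> / 3) + real n * (\<eta> / 3)"
      proof -
        have "(\<Sum>i<n. t (Y i \<omega>)) < real n * (\<eta> / 3)" using a2 n1 by (simp add: field_simps)
        moreover have "real n * \<bar>integral\<^sup>L D h - \<mu>k\<bar> \<le> real n * (\<eta> / 3)"
        proof -
          have ee: "\<eta> * e1 \<le> \<eta>" using e1 eta by (simp add: mult_left_le)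
          have "\<bar>integral\<^sup>L D h - \<mu>k\<bar> \<le> \<eta> / 3" using mudiff tau ee by linarith
          then show ?thesis by (intro mult_left_mono) auto
        qed
        ultimately show ?thesis using a1 by linarith
      qed
      finally have "\<bar>(\<Sum>i<n. h (Y i \<omega>)) - real n * integral\<^sup>L D h\<bar> < real n * \<eta>" by (simp add: mult.commute)
      then have "\<bar>(1 / real n) * ((\<Sum>i<n. h (Y i \<omega>)) - real n * integral\<^sup>L D h)\<bar> < \<eta>"
        using n1 by (simp add: abs_mult field_simps)
      then show "\<bar>(1 / real n) * (\<Sum>i<n. h (Y i \<omega>)) - integral\<^sup>L D h\<bar> \<le> \<eta>"
        using n1 by (simp add: right_diff_distrib)
    qed
    ultimately show "\<exists>A\<in>sets M. measure M A \<ge> 1 - e \<and>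
          (\<forall>\<omega>\<in>A. \<bar>(1 / real n) * (\<Sum>i<n. h (Y i \<omega>)) - integral\<^sup>L D h\<bar> \<le> \<eta>)" using Am by blast
  qed
  then show ?thesis unfolding hpe_def by blast
qed

lemma hess_sym_aux:
  fixes f :: "real^'n \<Rightarrow> real" and G :: "real^'n \<Rightarrow> real^'n" and H :: "real^'n^'n"
  assumes U: "open U" "x \<in> U" and fd: "\<And>z. z \<in> U \<Longrightarrow> (f has_derivative (\<lambda>v. G z \<bullet> v)) (at z)"
    and Gd: "(G has_derivative (\<lambda>v. H *v v)) (at x)" and eps: "\<epsilon> > 0"
  shows "\<exists>\<delta>>0. \<forall>t. 0 < t \<and> t < \<delta> \<longrightarrow>
     \<bar>f (x + t *\<^sub>R h + t *\<^sub>R k) - f (x + t *\<^sub>R h) - f (x + t *\<^sub>R k) + f x - t^2 * ((H *v k) \<bullet> h)\<bar>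
        \<le> \<epsilon> * t^2 * ((2 * norm h + norm k) * norm h)"
proof -
  obtain \<rho> where rho: "\<rho> > 0" "ball x \<rho> \<subseteq> U" using U open_contains_ball by blast
  obtain d where d: "d > 0" "\<forall>y. norm (y - x) < d \<longrightarrow> norm (G y - G x - H *v (y - x)) \<le> \<epsilon> * norm (y - x)"
    using Gd eps unfolding has_derivative_at_alt by blast
  define \<delta> where "\<delta> = min \<rho> d / (norm h + norm k + 1)"
  have hk1: "0 < norm h + norm k + 1" using norm_ge_zero[of h] norm_ge_zero[of k] by linarith
  have \<delta>: "\<delta> > 0" unfolding \<delta>_def using rho d hk1 by (intro divide_pos_pos) auto
  show ?thesis
  proof (intro exI[of _ \<delta>] conjI allI impI \<delta>)
    fix t :: real assume t: "0 < t \<and> t < \<delta>"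
    have tb: "t * (norm h + norm k) < min \<rho> d"
    proof -
      have "t * (norm h + norm k) \<le> t * (norm h + norm k + 1)" using t by simp
      also have "\<dots> < \<delta> * (norm h + norm k + 1)" using t hk1 by (intro mult_strict_right_mono) auto
      also have "\<dots> = min \<rho> d" unfolding \<delta>_def using hk1 by simp
      finally show ?thesis .
    qed
    have small: "\<And>s. 0 \<le> s \<Longrightarrow> s \<le> t \<Longrightarrow> norm (s *\<^sub>R h + t *\<^sub>R k) < min \<rho> d \<and> norm (s *\<^sub>R h) < min \<rho> d"
    proof -
      fix s assume s: "0 \<le> s" "s \<le> t"
      have "norm (s *\<^sub>R h + t *\<^sub>R k) \<le> norm (s *\<^sub>R h) + norm (t *\<^sub>R k)" by (rule norm_triangle_ineq)
      also have "\<dots> = s * norm h + t * norm k" using s t by simp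
      finally have "norm (s *\<^sub>R h + t *\<^sub>R k) \<le> s * norm h + t * norm k" .
      also have "\<dots> \<le> t * (norm h + norm k)" using s by (simp add: distrib_left mult_right_mono)
      finally have 1: "norm (s *\<^sub>R h + t *\<^sub>R k) < min \<rho> d" using tb by linarith
      have "norm (s *\<^sub>R h) \<le> t * (norm h + norm k)" using s
        by (simp add: distrib_left mult_mono add_increasing2)
      then show "norm (s *\<^sub>R h + t *\<^sub>R k) < min \<rho> d \<and> norm (s *\<^sub>R h) < min \<rho> d" using 1 tb by linarith
    qed
    define g where "g s = f (x + s *\<^sub>R h + t *\<^sub>R k) - f (x + s *\<^sub>R h)" for s
    define g' where "g' s = (G (x + s *\<^sub>R h + t *\<^sub>R k) - G (x + s *\<^sub>R h)) \<bullet> h" for s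
    have inU: "\<And>s. 0 \<le> s \<Longrightarrow> s \<le> t \<Longrightarrow> x + s *\<^sub>R h + t *\<^sub>R k \<in> U \<and> x + s *\<^sub>R h \<in> U"
    proof -
      fix s assume "0 \<le> s" "s \<le> t"
      have q1: "dist x (x + s *\<^sub>R h + t *\<^sub>R k) = norm (s *\<^sub>R h + t *\<^sub>R k)"
        unfolding dist_norm by (metis add.assoc add_diff_cancel_left' norm_minus_commute)
      have q2: "dist x (x + s *\<^sub>R h) = norm (s *\<^sub>R h)"
        unfolding dist_norm by (metis add_diff_cancel_left' norm_minus_commute)
      from small[OF \<open>0 \<le> s\<close> \<open>s \<le> t\<close>] have "dist x (x + s *\<^sub>R h + t *\<^sub>R k) < \<rho>" "dist x (x + s *\<^sub>R h) < \<rho>"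
        unfolding q1 q2 by auto
      then show "x + s *\<^sub>R h + t *\<^sub>R k \<in> U \<and> x + s *\<^sub>R h \<in> U" using rho by auto
    qed
    have deriv: "\<And>s. 0 \<le> s \<and> s \<le> t \<longrightarrow> DERIV g s :> g' s"
    proof (intro impI)
      fix s assume s: "0 \<le> s \<and> s \<le> t"
      have l1: "((\<lambda>s. x + s *\<^sub>R h + t *\<^sub>R k) has_derivative (\<lambda>r. r *\<^sub>R h)) (at s)"
        by (intro derivative_eq_intros) auto
      have l2: "((\<lambda>s. x + s *\<^sub>R h) has_derivative (\<lambda>r. r *\<^sub>R h)) (at s)"
        by (intro derivative_eq_intros) auto
      have c1: "((\<lambda>s. f (x + s *\<^sub>R h + t *\<^sub>R k)) has_derivative (\<lambda>r. G (x + s *\<^sub>R h + t *\<^sub>R k) \<bullet> (r *\<^sub>R h))) (at s)"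
        by (rule has_derivative_compose[OF l1 fd]) (use inU s in auto)
      have c2: "((\<lambda>s. f (x + s *\<^sub>R h)) has_derivative (\<lambda>r. G (x + s *\<^sub>R h) \<bullet> (r *\<^sub>R h))) (at s)"
        by (rule has_derivative_compose[OF l2 fd]) (use inU s in auto)
      have "(g has_derivative (\<lambda>r. G (x + s *\<^sub>R h + t *\<^sub>R k) \<bullet> (r *\<^sub>R h) - G (x + s *\<^sub>R h) \<bullet> (r *\<^sub>R h))) (at s)"
        unfolding g_def by (rule has_derivative_diff[OF c1 c2])
      moreover have "(\<lambda>r. G (x + s *\<^sub>R h + t *\<^sub>R k) \<bullet> (r *\<^sub>R h) - G (x + s *\<^sub>R h) \<bullet> (r *\<^sub>R h)) = (*) (g' s)"
        unfolding g'_def by (rule ext) (simp add: inner_diff_left algebra_simps)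
      ultimately show "DERIV g s :> g' s" unfolding has_field_derivative_def by simp
    qed
    obtain z where z: "0 < z" "z < t" "g t - g 0 = (t - 0) * g' z"
      using MVT2[of 0 t g g'] t deriv by auto
    have Ddef: "f (x + t *\<^sub>R h + t *\<^sub>R k) - f (x + t *\<^sub>R h) - f (x + t *\<^sub>R k) + f x = g t - g 0"
      unfolding g_def by simp
    have key: "\<bar>g' z - t * ((H *v k) \<bullet> h)\<bar> \<le> \<epsilon> * t * ((2 * norm h + norm k) * norm h)"
    proof -
      define a where "a = G (x + z *\<^sub>R h + t *\<^sub>R k) - G x - H *v (z *\<^sub>R h + t *\<^sub>R k)"
      define b where "b = G (x + z *\<^sub>R h) - G x - H *v (z *\<^sub>R h)"
      have sm: "norm (z *\<^sub>R h + t *\<^sub>R k) < d" "norm (z *\<^sub>R h) < d" using small[of z] z by auto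
      have na: "norm a \<le> \<epsilon> * norm (z *\<^sub>R h + t *\<^sub>R k)"
        using d(2)[rule_format, of "x + z *\<^sub>R h + t *\<^sub>R k"] sm unfolding a_def by (simp add: add.assoc)
      have nb: "norm b \<le> \<epsilon> * norm (z *\<^sub>R h)"
        using d(2)[rule_format, of "x + z *\<^sub>R h"] sm unfolding b_def by simp
      have eq: "g' z - t * ((H *v k) \<bullet> h) = (a - b) \<bullet> h"
        unfolding g'_def a_def b_def
        by (simp add: matrix_vector_right_distrib matrix_vector_mult_scaleR inner_diff_left inner_add_left algebra_simps)
      have "\<bar>(a - b) \<bullet> h\<bar> \<le> norm (a - b) * norm h" by (rule Cauchy_Schwarz_ineq2)
      also have "\<dots> \<le> (norm a + norm b) * norm h" by (intro mult_right_mono norm_triangle_ineq4) auto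
      also have "\<dots> \<le> (\<epsilon> * norm (z *\<^sub>R h + t *\<^sub>R k) + \<epsilon> * norm (z *\<^sub>R h)) * norm h"
        using na nb by (intro mult_right_mono) auto
      also have "\<dots> \<le> (\<epsilon> * (t * norm h + t * norm k) + \<epsilon> * (t * norm h)) * norm h"
      proof -
        have "norm (z *\<^sub>R h + t *\<^sub>R k) \<le> norm (z *\<^sub>R h) + norm (t *\<^sub>R k)" by (rule norm_triangle_ineq)
        also have "\<dots> = z * norm h + t * norm k" using z by simp
        also have "\<dots> \<le> t * norm h + t * norm k" using z by (simp add: mult_right_mono)
        finally have "norm (z *\<^sub>R h + t *\<^sub>R k) \<le> t * norm h + t * norm k" .
        moreover have "norm (z *\<^sub>R h) \<le> t * norm h" using z by (simp add: mult_right_mono)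
        ultimately show ?thesis using eps by (intro mult_right_mono add_mono mult_left_mono) auto
      qed
      also have "\<dots> = \<epsilon> * t * ((2 * norm h + norm k) * norm h)" by (simp add: algebra_simps)
      finally show ?thesis using eq by simp
    qed
    have "\<bar>f (x + t *\<^sub>R h + t *\<^sub>R k) - f (x + t *\<^sub>R h) - f (x + t *\<^sub>R k) + f x - t^2 * ((H *v k) \<bullet> h)\<bar>
        = t * \<bar>g' z - t * ((H *v k) \<bullet> h)\<bar>"
    proof -
      have "f (x + t *\<^sub>R h + t *\<^sub>R k) - f (x + t *\<^sub>R h) - f (x + t *\<^sub>R k) + f x - t^2 * ((H *v k) \<bullet> h)
          = t * (g' z - t * ((H *v k) \<bullet> h))"
        unfolding Ddef z(3) by (simp add: power2_eq_square right_diff_distrib mult.assoc)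
      then show ?thesis using t by (simp add: abs_mult)
    qed
    also have "\<dots> \<le> t * (\<epsilon> * t * ((2 * norm h + norm k) * norm h))" using key t by (intro mult_left_mono) auto
    also have "\<dots> = \<epsilon> * t^2 * ((2 * norm h + norm k) * norm h)" by (simp add: power2_eq_square)
    finally show "\<bar>f (x + t *\<^sub>R h + t *\<^sub>R k) - f (x + t *\<^sub>R h) - f (x + t *\<^sub>R k) + f x - t^2 * ((H *v k) \<bullet> h)\<bar>
        \<le> \<epsilon> * t^2 * ((2 * norm h + norm k) * norm h)" .
  qed
qed

lemma eq_of_eps:
  fixes a b C :: real
  assumes "\<And>\<epsilon>. \<epsilon> > 0 \<Longrightarrow> \<bar>a - b\<bar> \<le> \<epsilon> * C" "C \<ge> 0"
  shows "a = b"
proof (rule ccontr)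
  assume "a \<noteq> b"
  then have p: "\<bar>a - b\<bar> > 0" by simp
  have "\<bar>a - b\<bar> \<le> (\<bar>a - b\<bar> / (C + 1)) * C" using assms(1)[of "\<bar>a - b\<bar> / (C + 1)"] p assms(2) by simp
  also have "\<dots> < \<bar>a - b\<bar>" using p assms(2) by (simp add: field_simps)
  finally show False by simp
qed

lemma hess_sym:
  fixes f :: "real^'n \<Rightarrow> real" and G :: "real^'n \<Rightarrow> real^'n" and H :: "real^'n^'n"
  assumes U: "open U" "x \<in> U" and fd: "\<And>z. z \<in> U \<Longrightarrow> (f has_derivative (\<lambda>v. G z \<bullet> v)) (at z)"
    and Gd: "(G has_derivative (\<lambda>v. H *v v)) (at x)"
  shows "(H *v k) \<bullet> h = (H *v h) \<bullet> k"
proof (rule eq_of_eps[where C="(2 * norm h + norm k) * norm h + (2 * norm k + norm h) * norm k"])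
  fix \<epsilon> :: real assume eps: "\<epsilon> > 0"
  obtain d1 where d1: "d1 > 0" "\<forall>t. 0 < t \<and> t < d1 \<longrightarrow>
     \<bar>f (x + t *\<^sub>R h + t *\<^sub>R k) - f (x + t *\<^sub>R h) - f (x + t *\<^sub>R k) + f x - t^2 * ((H *v k) \<bullet> h)\<bar>
        \<le> \<epsilon> * t^2 * ((2 * norm h + norm k) * norm h)"
    using hess_sym_aux[OF U fd Gd eps, of h k] by blast
  obtain d2 where d2: "d2 > 0" "\<forall>t. 0 < t \<and> t < d2 \<longrightarrow>
     \<bar>f (x + t *\<^sub>R k + t *\<^sub>R h) - f (x + t *\<^sub>R k) - f (x + t *\<^sub>R h) + f x - t^2 * ((H *v h) \<bullet> k)\<bar>
        \<le> \<epsilon> * t^2 * ((2 * norm k + norm h) * norm k)"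
    using hess_sym_aux[OF U fd Gd eps, of k h] by blast
  define t where "t = min d1 d2 / 2"
  have t: "0 < t" "t < d1" "t < d2" unfolding t_def using d1 d2 by auto
  define \<Delta> where "\<Delta> = f (x + t *\<^sub>R h + t *\<^sub>R k) - f (x + t *\<^sub>R h) - f (x + t *\<^sub>R k) + f x"
  have swap: "x + t *\<^sub>R k + t *\<^sub>R h = x + t *\<^sub>R h + t *\<^sub>R k" by (simp add: algebra_simps)
  have e1: "\<bar>\<Delta> - t^2 * ((H *v k) \<bullet> h)\<bar> \<le> \<epsilon> * t^2 * ((2 * norm h + norm k) * norm h)"
    using d1(2) t unfolding \<Delta>_def by blast
  have e2: "\<bar>\<Delta> - t^2 * ((H *v h) \<bullet> k)\<bar> \<le> \<epsilon> * t^2 * ((2 * norm k + norm h) * norm k)"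
  proof -
    have X: "\<bar>f (x + t *\<^sub>R h + t *\<^sub>R k) - f (x + t *\<^sub>R k) - f (x + t *\<^sub>R h) + f x - t^2 * ((H *v h) \<bullet> k)\<bar>
        \<le> \<epsilon> * t^2 * ((2 * norm k + norm h) * norm k)"
      using d2(2)[rule_format, of t] t swap by simp
    have "\<Delta> - t^2 * ((H *v h) \<bullet> k) = f (x + t *\<^sub>R h + t *\<^sub>R k) - f (x + t *\<^sub>R k) - f (x + t *\<^sub>R h) + f x - t^2 * ((H *v h) \<bullet> k)"
      unfolding \<Delta>_def by simp
    then show ?thesis using X by simp
  qed
  have "t^2 * \<bar>(H *v k) \<bullet> h - (H *v h) \<bullet> k\<bar> = \<bar>t^2 * ((H *v k) \<bullet> h) - t^2 * ((H *v h) \<bullet> k)\<bar>"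
    by (simp only: right_diff_distrib[symmetric] abs_mult) simp
  also have "\<dots> \<le> \<bar>\<Delta> - t^2 * ((H *v k) \<bullet> h)\<bar> + \<bar>\<Delta> - t^2 * ((H *v h) \<bullet> k)\<bar>" by linarith
  also have "\<dots> \<le> \<epsilon> * t^2 * ((2 * norm h + norm k) * norm h) + \<epsilon> * t^2 * ((2 * norm k + norm h) * norm k)"
    using e1 e2 by linarith
  also have "\<dots> = t^2 * (\<epsilon> * ((2 * norm h + norm k) * norm h + (2 * norm k + norm h) * norm k))"
    by (simp add: algebra_simps)
  finally have "t^2 * \<bar>(H *v k) \<bullet> h - (H *v h) \<bullet> k\<bar> \<le> t^2 * (\<epsilon> * ((2 * norm h + norm k) * norm h + (2 * norm k + norm h) * norm k))" .
  then show "\<bar>(H *v k) \<bullet> h - (H *v h) \<bullet> k\<bar> \<le> \<epsilon> * ((2 * norm h + norm k) * norm h + (2 * norm k + norm h) * norm k)"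
    using t by simp
qed simp

definition fro :: "real^'n^'m \<Rightarrow> real" where
  "fro B = (\<Sum>i\<in>UNIV. \<Sum>j\<in>UNIV. \<bar>B $ i $ j\<bar>)"

lemma fro_nonneg: "fro B \<ge> 0"
  unfolding fro_def by (intro sum_nonneg) auto

lemma entry_le_fro: "\<bar>B $ i $ j\<bar> \<le> fro B"
proof -
  have "\<bar>B $ i $ j\<bar> \<le> (\<Sum>j\<in>UNIV. \<bar>B $ i $ j\<bar>)"
    by (rule member_le_sum) auto
  also have "\<dots> \<le> fro B" unfolding fro_def
    by (rule member_le_sum[where f="\<lambda>i. \<Sum>j\<in>UNIV. \<bar>B $ i $ j\<bar>"]) (auto intro: sum_nonneg)
  finally show ?thesis .
qed

lemma norm_le_fro: "norm B \<le> fro B"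
proof -
  have "norm B \<le> (\<Sum>i\<in>UNIV. norm (B $ i))" unfolding norm_vec_def by (rule L2_set_le_sum) auto
  also have "\<dots> \<le> (\<Sum>i\<in>UNIV. \<Sum>j\<in>UNIV. \<bar>B $ i $ j\<bar>)"
    by (intro sum_mono norm_le_l1_cart)
  finally show ?thesis unfolding fro_def .
qed

lemma fro_le_norm: "fro (B :: real^'n^'m) \<le> real CARD('m) * real CARD('n) * norm B"
proof -
  have "fro B \<le> (\<Sum>i\<in>(UNIV::'m set). \<Sum>j\<in>(UNIV::'n set). norm B)"
    unfolding fro_def
  proof (intro sum_mono)
    fix i j
    have "\<bar>B $ i $ j\<bar> \<le> norm (B $ i)" by (rule component_le_norm_cart)
    also have "\<dots> \<le> norm B" unfolding norm_vec_def[of B] by (rule member_le_L2_set) simp_all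
    finally show "\<bar>B $ i $ j\<bar> \<le> norm B" .
  qed
  then show ?thesis by simp
qed

lemma fro_add: "fro (B + C) \<le> fro B + fro C"
  unfolding fro_def by (simp add: sum.distrib[symmetric] sum_mono abs_triangle_ineq)

lemma fro_diff: "fro (B - C) \<le> fro B + fro C"
  unfolding fro_def by (simp add: sum.distrib[symmetric] sum_mono abs_triangle_ineq4)

lemma fro_scale: "fro (c *\<^sub>R B) = \<bar>c\<bar> * fro B"
  unfolding fro_def by (simp add: abs_mult sum_distrib_left)

lemma fro_sum: "finite I \<Longrightarrow> fro (\<Sum>k\<in>I. B k) \<le> (\<Sum>k\<in>I. fro (B k))"
proof (induction I rule: finite_induct)
  case empty then show ?case by (simp add: fro_def)
next
  case (insert x F)
  then show ?case using fro_add[of "B x" "\<Sum>k\<in>F. B k"] by simp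
qed

lemma mv_bound: "norm (B *v x) \<le> fro B * norm x"
proof -
  have "norm (B *v x) \<le> (\<Sum>i\<in>UNIV. \<bar>(B *v x) $ i\<bar>)" by (rule norm_le_l1_cart)
  also have "\<dots> \<le> (\<Sum>i\<in>UNIV. \<Sum>j\<in>UNIV. \<bar>B $ i $ j\<bar> * norm x)"
  proof (intro sum_mono)
    fix i
    have "\<bar>(B *v x) $ i\<bar> = \<bar>\<Sum>j\<in>UNIV. B $ i $ j * x $ j\<bar>" by (simp add: matrix_vector_mult_def)
    also have "\<dots> \<le> (\<Sum>j\<in>UNIV. \<bar>B $ i $ j * x $ j\<bar>)" by (rule sum_abs)
    also have "\<dots> \<le> (\<Sum>j\<in>UNIV. \<bar>B $ i $ j\<bar> * norm x)"
      by (intro sum_mono) (simp add: abs_mult mult_left_mono component_le_norm_cart)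
    finally show "\<bar>(B *v x) $ i\<bar> \<le> (\<Sum>j\<in>UNIV. \<bar>B $ i $ j\<bar> * norm x)" .
  qed
  also have "\<dots> = fro B * norm x" unfolding fro_def by (simp add: sum_distrib_right)
  finally show ?thesis .
qed

lemma quad_bound: "\<bar>x \<bullet> (B *v y)\<bar> \<le> fro B * norm x * norm y"
proof -
  have "\<bar>x \<bullet> (B *v y)\<bar> \<le> norm x * norm (B *v y)" by (rule Cauchy_Schwarz_ineq2)
  also have "\<dots> \<le> norm x * (fro B * norm y)" by (intro mult_left_mono mv_bound) auto
  finally show ?thesis by (simp add: ac_simps)
qed

lemma onorm_mv: "onorm (\<lambda>h. B *v h) \<le> fro B"
  by (rule onorm_le) (rule mv_bound)

lemma inv_props:
  fixes B :: "real^'n^'n"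
  assumes c: "c > 0" and pd: "\<And>x. x \<bullet> (B *v x) \<ge> c * (norm x)^2"
  shows "B ** matrix_inv B = mat 1" "matrix_inv B ** B = mat 1"
    and "\<And>y. norm (matrix_inv B *v y) \<le> norm y / c"
proof -
  have ker: "\<forall>x. B *v x = 0 \<longrightarrow> x = 0"
  proof (intro allI impI)
    fix x assume "B *v x = 0"
    then have "c * (norm x)^2 \<le> 0" using pd[of x] by simp
    then show "x = 0" using c by (simp add: mult_le_0_iff)
  qed
  then obtain B' where B': "B' ** B = mat 1" using matrix_left_invertible_ker by blast
  then have "B ** B' = mat 1" using matrix_left_right_inverse by blast
  then have ex: "\<exists>A'. B ** A' = mat 1 \<and> A' ** B = mat 1" using B' by blast
  have both: "B ** matrix_inv B = mat 1 \<and> matrix_inv B ** B = mat 1"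
    unfolding matrix_inv_def by (rule someI_ex[OF ex])
  then show "B ** matrix_inv B = mat 1" "matrix_inv B ** B = mat 1" by auto
  fix y
  define x where "x = matrix_inv B *v y"
  have Bx: "B *v x = y" unfolding x_def using both by (simp add: matrix_vector_mul_assoc)
  have "c * (norm x)^2 \<le> x \<bullet> y" using pd[of x] Bx by simp
  also have "\<dots> \<le> norm x * norm y" by (rule order_trans[OF abs_ge_self Cauchy_Schwarz_ineq2])
  finally have "c * (norm x)^2 \<le> norm x * norm y" .
  then have "c * norm x \<le> norm y"
    by (cases "x = 0") (auto simp: power2_eq_square)
  then show "norm (matrix_inv B *v y) \<le> norm y / c" unfolding x_def[symmetric] using c
    by (simp add: field_simps)
qed

lemma inv_sym:
  fixes B :: "real^'n^'n"
  assumes sym: "transpose B = B" and l: "matrix_inv B ** B = mat 1" and r: "B ** matrix_inv B = mat 1"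
  shows "transpose (matrix_inv B) = matrix_inv B"
proof -
  define A where "A = matrix_inv B"
  have "transpose A ** B = mat 1"
  proof -
    have "transpose A ** B = transpose A ** transpose B" using sym by simp
    also have "\<dots> = transpose (B ** A)" by (simp add: matrix_transpose_mul)
    also have "\<dots> = mat 1" using r unfolding A_def by simp
    finally show ?thesis .
  qed
  then have "transpose A = transpose A ** (B ** A)" using r unfolding A_def by simp
  also have "\<dots> = (transpose A ** B) ** A" by (simp add: matrix_mul_assoc)
  also have "\<dots> = A" using \<open>transpose A ** B = mat 1\<close> by simp
  finally show ?thesis unfolding A_def .
qed

lemma sym_inner:
  fixes A :: "real^'n^'n"
  assumes "transpose A = A"
  shows "d \<bullet> (A *v v) = (A *v d) \<bullet> v"
proof -
  have "d \<bullet> (A *v v) = (d v* A) \<bullet> v" by (simp add: dot_lmul_matrix)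
  also have "d v* A = transpose A *v d" by simp
  finally show ?thesis using assms by simp
qed

lemma trace_formula:
  fixes A :: "real^'p^'p" and v d :: "nat \<Rightarrow> real^'p"
  shows "trace (A ** (\<chi> a b. c * (\<Sum>i<n. v i $ a * d i $ b))) = c * (\<Sum>i<n. d i \<bullet> (A *v v i))"
proof -
  define F where "F i a k = d i $ a * (A $ a $ k * v i $ k)" for i a k
  have "trace (A ** (\<chi> a b. c * (\<Sum>i<n. v i $ a * d i $ b)))
      = (\<Sum>a\<in>UNIV. \<Sum>k\<in>UNIV. A $ a $ k * (c * (\<Sum>i<n. v i $ k * d i $ a)))"
    by (simp add: trace_def matrix_matrix_mult_def)
  also have "\<dots> = (\<Sum>a\<in>UNIV. \<Sum>k\<in>UNIV. c * (\<Sum>i<n. F i a k))"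
    unfolding F_def by (intro sum.cong refl) (simp add: sum_distrib_left mult_ac)
  also have "\<dots> = c * (\<Sum>a\<in>UNIV. \<Sum>k\<in>UNIV. \<Sum>i<n. F i a k)"
    by (simp add: sum_distrib_left)
  also have "(\<Sum>a\<in>UNIV. \<Sum>k\<in>UNIV. \<Sum>i<n. F i a k) = (\<Sum>a\<in>UNIV. \<Sum>i<n. \<Sum>k\<in>UNIV. F i a k)"
    by (intro sum.cong refl) (rule sum.swap)
  also have "\<dots> = (\<Sum>i<n. \<Sum>a\<in>UNIV. \<Sum>k\<in>UNIV. F i a k)"
    by (rule sum.swap)
  also have "\<dots> = (\<Sum>i<n. d i \<bullet> (A *v v i))"
    unfolding F_def by (intro sum.cong refl) (simp add: inner_vec_def matrix_vector_mult_def sum_distrib_left)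
  finally show ?thesis .
qed

lemma lin_rem:
  fixes f :: "real^'p \<Rightarrow> 'b::real_normed_vector"
  assumes S: "convex S" "t \<in> S" "s \<in> S"
    and fd: "\<And>x. x \<in> S \<Longrightarrow> (f has_derivative f' x) (at x)"
    and ob: "\<And>x. x \<in> S \<Longrightarrow> onorm (\<lambda>h. f' x h - f' t h) \<le> L * norm (x - t)"
    and L: "L \<ge> 0"
  shows "norm (f s - f t - f' t (s - t)) \<le> L * (norm (s - t))^2"
proof -
  define T where "T = closed_segment t s"
  have TS: "T \<subseteq> S" unfolding T_def using S closed_segment_subset by blast
  have "norm (f s - f t - f' t (s - t)) \<le> norm (s - t) * (L * norm (s - t))"
  proof (rule differentiable_bound_linearization[where S=T])
    show "\<And>u. u \<in> {0..1} \<Longrightarrow> t + u *\<^sub>R (s - t) \<in> T"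
      unfolding T_def in_segment by (auto intro!: exI simp: algebra_simps)
    show "\<And>x. x \<in> T \<Longrightarrow> (f has_derivative f' x) (at x within T)"
      using fd TS by (auto intro: has_derivative_at_withinI)
    show "\<And>x. x \<in> T \<Longrightarrow> onorm (f' x - f' t) \<le> L * norm (s - t)"
    proof -
      fix x assume x: "x \<in> T"
      have "f' x - f' t = (\<lambda>h. f' x h - f' t h)" by (rule ext) simp
      then have "onorm (f' x - f' t) \<le> L * norm (x - t)" using ob[of x] x TS by auto
      also have "\<dots> \<le> L * norm (s - t)" using segment_bound1[of x t s] x L unfolding T_def
        by (intro mult_left_mono) auto
      finally show "onorm (f' x - f' t) \<le> L * norm (s - t)" .
    qed
    show "t \<in> T" unfolding T_def by simp
  qed
  then show ?thesis by (simp add: power2_eq_square ac_simps)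
qed

lemma lipschitz_from_deriv:
  fixes f :: "real^'p \<Rightarrow> 'b::real_normed_vector"
  assumes S: "convex S" "t \<in> S" "s \<in> S"
    and fd: "\<And>x. x \<in> S \<Longrightarrow> (f has_derivative f' x) (at x)"
    and ob: "\<And>x. x \<in> S \<Longrightarrow> onorm (f' x) \<le> B"
  shows "norm (f s - f t) \<le> B * norm (s - t)"
  by (rule differentiable_bound[OF S(1) _ ob S(3) S(2)]) (use fd in \<open>auto intro: has_derivative_at_withinI\<close>)

lemma linear_axis_expand:
  fixes T :: "real^'p \<Rightarrow> 'b::real_vector"
  assumes "linear T"
  shows "T h = (\<Sum>k\<in>UNIV. h $ k *\<^sub>R T (axis k 1))"
proof -
  have "T h = T (\<Sum>k\<in>UNIV. h $ k *\<^sub>R axis k 1)"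
    using basis_expansion[of h] by (simp add: scalar_mult_eq_scaleR)
  also have "\<dots> = (\<Sum>k\<in>UNIV. h $ k *\<^sub>R T (axis k 1))"
    using assms by (simp add: linear_sum linear_scale)
  finally show ?thesis .
qed

lemma tensor_onorm:
  fixes T :: "real^'p \<Rightarrow> real^'p^'p"
  assumes lin: "bounded_linear T" and bd: "\<And>i j k. \<bar>T (axis k 1) $ i $ j\<bar> \<le> m"
  shows "onorm T \<le> real CARD('p)^3 * m"
proof (rule onorm_le)
  fix h :: "real^'p"
  have m0: "m \<ge> 0" using bd[of undefined undefined undefined] by linarith
  have ent: "\<bar>T h $ i $ j\<bar> \<le> real CARD('p) * m * norm h" for i j
  proof -
    have "T h = (\<Sum>k\<in>UNIV. h $ k *\<^sub>R T (axis k 1))"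
      using lin by (intro linear_axis_expand) (rule bounded_linear.linear)
    then have "\<bar>T h $ i $ j\<bar> = \<bar>\<Sum>k\<in>UNIV. h $ k * T (axis k 1) $ i $ j\<bar>" by (simp add: sum_component)
    also have "\<dots> \<le> (\<Sum>k\<in>UNIV. \<bar>h $ k * T (axis k 1) $ i $ j\<bar>)" by (rule sum_abs)
    also have "\<dots> \<le> (\<Sum>k\<in>(UNIV::'p set). norm h * m)"
      by (intro sum_mono) (simp add: abs_mult mult_mono component_le_norm_cart bd)
    finally show ?thesis by (simp add: ac_simps)
  qed
  have "norm (T h) \<le> fro (T h)" by (rule norm_le_fro)
  also have "\<dots> \<le> (\<Sum>i\<in>(UNIV::'p set). \<Sum>j\<in>(UNIV::'p set). real CARD('p) * m * norm h)"
    unfolding fro_def by (intro sum_mono ent)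
  also have "\<dots> = real CARD('p)^3 * m * norm h" by (simp add: power3_eq_cube)
  finally show "norm (T h) \<le> real CARD('p)^3 * m * norm h" .
qed

lemma mat_onorm:
  fixes B :: "real^'p^'p"
  assumes bd: "\<And>i j. \<bar>B $ i $ j\<bar> \<le> m"
  shows "onorm (\<lambda>h. B *v h) \<le> real CARD('p)^2 * m"
proof -
  have "fro B \<le> (\<Sum>i\<in>(UNIV::'p set). \<Sum>j\<in>(UNIV::'p set). m)" unfolding fro_def by (intro sum_mono bd)
  also have "\<dots> = real CARD('p)^2 * m" by (simp add: power2_eq_square)
  finally show ?thesis using onorm_mv[of B] by linarith
qed

definition hp :: "'a measure \<Rightarrow> (nat \<Rightarrow> 'a \<Rightarrow> bool) \<Rightarrow> bool" where
  "hp M P \<longleftrightarrow> (\<forall>e>0. hpe M e P)"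

lemma hp_conj:
  assumes "prob_space M" "hp M P" "hp M Q"
  shows "hp M (\<lambda>n \<omega>. P n \<omega> \<and> Q n \<omega>)"
  unfolding hp_def
proof (intro allI impI)
  fix e :: real assume e: "e > 0"
  have "hpe M (e/2 + e/2) (\<lambda>n \<omega>. P n \<omega> \<and> Q n \<omega>)"
    using assms e unfolding hp_def by (intro hpe_conj) auto
  then show "hpe M e (\<lambda>n \<omega>. P n \<omega> \<and> Q n \<omega>)" by simp
qed

lemma hp_ball:
  assumes P: "prob_space M" and fin: "finite I" and h: "\<And>i. i \<in> I \<Longrightarrow> hp M (Q i)"
  shows "hp M (\<lambda>n \<omega>. \<forall>i\<in>I. Q i n \<omega>)"
  using fin h
proof (induction I rule: finite_induct)
  case empty
  show ?case unfolding hp_def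
    by (intro allI impI hpe_mono[OF hpe_true[OF P], where ?N0.0=0]) auto
next
  case (insert x F)
  have "hp M (\<lambda>n \<omega>. Q x n \<omega> \<and> (\<forall>i\<in>F. Q i n \<omega>))"
    using insert by (intro hp_conj[OF P]) auto
  then show ?case by simp
qed

lemma sqrt_small:
  assumes b: "b > 0"
  shows "\<exists>N::nat. \<forall>n\<ge>N. A / sqrt (real n) \<le> b"
proof -
  obtain N :: nat where N: "(\<bar>A\<bar> / b)^2 + 1 < real N" using reals_Archimedean2 by blast
  show ?thesis
  proof (intro exI allI impI)
    fix n assume "N \<le> n"
    then have n: "(\<bar>A\<bar> / b)^2 < real n" using N by simp
    then have "\<bar>A\<bar> / b < sqrt (real n)"
      using real_less_rsqrt by (metis abs_of_nonneg b divide_nonneg_pos abs_ge_zero less_le)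
    then have "\<bar>A\<bar> < b * sqrt (real n)" using b by (simp add: divide_less_eq mult.commute)
    moreover have "sqrt (real n) > 0" using n by (smt (verit) of_nat_0_less_iff real_sqrt_gt_0_iff zero_le_power2)
    ultimately have "\<bar>A\<bar> / sqrt (real n) \<le> b" by (simp add: divide_le_eq mult.commute)
    then show "A / sqrt (real n) \<le> b" using \<open>sqrt (real n) > 0\<close>
      by (smt (verit) abs_ge_self divide_right_mono)
  qed
qed

lemma pd_uniform:
  fixes E :: "real^'p^'p"
  assumes pd: "\<And>x. x \<noteq> 0 \<Longrightarrow> x \<bullet> (E *v x) > 0"
  shows "\<exists>c>0. \<forall>x. x \<bullet> (E *v x) \<ge> c * (norm x)^2"
proof -
  define q where "q x = x \<bullet> (E *v x)" for x :: "real^'p"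
  have cq: "continuous_on (sphere 0 1) q" unfolding q_def
    by (intro continuous_intros linear_continuous_on matrix_vector_mul_bounded_linear)
  have ne: "sphere (0::real^'p) 1 \<noteq> {}" by simp
  obtain u where u: "u \<in> sphere 0 1" "\<forall>y\<in>sphere 0 1. q u \<le> q y"
    using continuous_attains_inf[OF compact_sphere ne cq] by blast
  have u0: "u \<noteq> 0" using u(1) by auto
  have c: "q u > 0" unfolding q_def using pd[OF u0] .
  show ?thesis
  proof (intro exI[of _ "q u"] conjI allI c)
    fix x :: "real^'p"
    show "x \<bullet> (E *v x) \<ge> q u * (norm x)^2"
    proof (cases "x = 0")
      case True then show ?thesis by simp
    next
      case False
      define w where "w = (1 / norm x) *\<^sub>R x"
      have w: "w \<in> sphere 0 1" unfolding w_def using False by simp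
      have xw: "x = norm x *\<^sub>R w" unfolding w_def using False by simp
      have "x \<bullet> (E *v x) = (norm x)^2 * q w"
        unfolding q_def by (subst (1 2) xw) (simp add: matrix_vector_mult_scaleR power2_eq_square)
      also have "\<dots> \<ge> (norm x)^2 * q u" using u(2) w by (intro mult_left_mono) auto
      finally show ?thesis by (simp add: ac_simps)
    qed
  qed
qed

lemma grad_zero:
  fixes F :: "real^'p \<Rightarrow> real"
  assumes d: "(F has_derivative (\<lambda>h. G \<bullet> h)) (at x)" and x: "x \<in> interior \<Theta>"
    and m: "\<And>\<theta>. \<theta> \<in> \<Theta> \<Longrightarrow> F x \<le> F \<theta>"
  shows "G = 0"
proof -
  have "eventually (\<lambda>y. y \<in> interior \<Theta>) (at x)"
    using x by (intro eventually_at_in_open') auto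
  then have "eventually (\<lambda>y. F x \<le> F y) (at x)"
    by eventually_elim (use m interior_subset in blast)
  then have "(\<lambda>h. G \<bullet> h) = (\<lambda>h. 0)" by (rule has_derivative_local_min[OF d])
  then have "G \<bullet> G = 0" by meson
  then show ?thesis by simp
qed

lemma matvec_sum: "finite I \<Longrightarrow> (\<Sum>k\<in>I. B k) *v (x :: real^'p) = (\<Sum>k\<in>I. B k *v x)"
  by (induction I rule: finite_induct) (auto simp: matrix_vector_mult_add_rdistrib)

lemma sum_remove_i:
  assumes i: "i < (n::nat)" shows "(\<Sum>k\<in>{..<n} - {i}. f k) = (\<Sum>k<n. f k) - (f i :: 'a::ab_group_add)"
proof -
  have "sum f {..<n} = f i + sum f ({..<n} - {i})" using i by (intro sum.remove) auto
  then show ?thesis by (simp add: algebra_simps)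
qed

lemma det_bound:
  fixes Yk :: "nat \<Rightarrow> 'y" and th :: "real^'p" and lo :: "nat \<Rightarrow> real^'p"
    and Dphi :: "real^'p \<Rightarrow> 'y \<Rightarrow> real^'p" and Hphi :: "real^'p \<Rightarrow> 'y \<Rightarrow> real^'p^'p"
    and Dpsi :: "real^'p \<Rightarrow> 'y \<Rightarrow> real^'p" and psi :: "('y \<Rightarrow> real) \<Rightarrow> 'y \<Rightarrow> real"
    and g :: "real^'p \<Rightarrow> 'y \<Rightarrow> real" and m1 m2 f8 :: "'y \<Rightarrow> real" and n :: nat
  defines "H \<equiv> (1 / real n) *\<^sub>R (\<Sum>k<n. Hphi th (Yk k))"
  assumes n2: "n \<ge> 2"
    and gz: "(\<Sum>k<n. Dphi th (Yk k)) = 0"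
    and gzl: "\<And>i. i < n \<Longrightarrow> (\<Sum>k\<in>{..<n} - {i}. Dphi (lo i) (Yk k)) = 0"
    and remH: "\<And>i k. i < n \<Longrightarrow> k < n \<Longrightarrow>
       norm (Dphi (lo i) (Yk k) - Dphi th (Yk k) - Hphi th (Yk k) *v (lo i - th)) \<le> L1 * m1 (Yk k) * (norm (lo i - th))^2"
    and remV: "\<And>i. i < n \<Longrightarrow>
       \<bar>psi (g (lo i)) (Yk i) - psi (g th) (Yk i) - Dpsi th (Yk i) \<bullet> (lo i - th)\<bar> \<le> Q * m2 (Yk i) * (norm (lo i - th))^2"
    and symH: "\<And>k. k < n \<Longrightarrow> transpose (Hphi th (Yk k)) = Hphi th (Yk k)"
    and c: "c > 0" and pdH: "\<And>x. x \<bullet> (H *v x) \<ge> c * (norm x)^2"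
    and froHk: "\<And>k. k < n \<Longrightarrow> fro (Hphi th (Yk k)) \<le> f8 (Yk k)"
    and f8n: "\<And>k. k < n \<Longrightarrow> f8 (Yk k) \<le> (c / 4) * real n"
    and bD: "\<And>i. i < n \<Longrightarrow> norm (Dphi th (Yk i)) \<le> K3"
    and bV: "\<And>i. i < n \<Longrightarrow> norm (Dpsi th (Yk i)) \<le> K4"
    and a5: "(1 / real n) * (\<Sum>k<n. m1 (Yk k)) \<le> K5"
    and a6: "(1 / real n) * (\<Sum>k<n. m2 (Yk k)) \<le> K6"
    and a7: "(1 / real n) * (\<Sum>k<n. f8 (Yk k)) \<le> K7"
    and m1p: "\<And>k. m1 (Yk k) \<ge> 0" and m2p: "\<And>k. m2 (Yk k) \<ge> 0"
    and small: "\<And>i. i < n \<Longrightarrow> L1 * K5 * norm (lo i - th) \<le> c / 4"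
    and Q: "Q \<ge> 0" and L1: "L1 \<ge> 0"
  shows "\<bar>(1 / real n) * (\<Sum>i<n. psi (g (lo i)) (Yk i)) -
          ((1 / real n) * (\<Sum>i<n. psi (g th) (Yk i)) +
           trace (matrix_inv H ** (\<chi> a b. (1 / real n) * (\<Sum>i<n. Dpsi th (Yk i) $ a * ((1 / (real n - 1)) *\<^sub>R Dphi th (Yk i)) $ b))))\<bar>
         \<le> (Q * K6 * (2 * K3 / c)^2 + (K4 / c) * (2 * K3 + K7 * (2 * K3 / c) + L1 * K5 * (2 * K3 / c)^2)) * (1 / (real n)^2)"
proof -
  define A where "A = matrix_inv H"
  define N where "N = real n"
  have N2: "N \<ge> 2" unfolding N_def using n2 by simp
  have N0: "N > 0" using N2 by simp
  have inv: "H ** A = mat 1" "A ** H = mat 1" "\<And>y. norm (A *v y) \<le> norm y / c"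
    using inv_props[OF c pdH] unfolding A_def by auto
  have symHt: "transpose H = H"
  proof -
    have "\<And>i j. H $ j $ i = H $ i $ j"
    proof -
      fix i j
      have "\<And>k. k < n \<Longrightarrow> Hphi th (Yk k) $ j $ i = Hphi th (Yk k) $ i $ j"
      proof -
        fix k assume k: "k < n"
        have "Hphi th (Yk k) $ j $ i = transpose (Hphi th (Yk k)) $ i $ j" by (simp add: transpose_def)
        then show "Hphi th (Yk k) $ j $ i = Hphi th (Yk k) $ i $ j" using symH[OF k] by simp
      qed
      then show "H $ j $ i = H $ i $ j" unfolding H_def by (simp add: sum_component)
    qed
    then show ?thesis by (simp add: transpose_def vec_eq_iff)
  qed
  have symA: "transpose A = A" unfolding A_def by (rule inv_sym[OF symHt inv(2,1)[unfolded A_def]])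
  have "norm (Dphi th (Yk 0)) \<le> K3" using bD n2 by simp
  then have K3: "K3 \<ge> 0" using norm_ge_zero order_trans by blast
  have "norm (Dpsi th (Yk 0)) \<le> K4" using bV n2 by simp
  then have K4: "K4 \<ge> 0" using norm_ge_zero order_trans by blast
  have K5: "K5 \<ge> 0" using a5 m1p N0 by (smt (verit) N_def divide_nonneg_nonneg mult_nonneg_nonneg of_nat_0_le_iff sum_nonneg)
  have sumH: "(\<Sum>k<n. Hphi th (Yk k)) = N *\<^sub>R H" unfolding H_def N_def using N0 N_def by simp
  define \<delta> where "\<delta> = 2 * K3 / (c * N)"
  have \<delta>0: "\<delta> \<ge> 0" unfolding \<delta>_def using K3 c N0 by simp
  define err where "err i = psi (g (lo i)) (Yk i) - psi (g th) (Yk i) -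
       ((1 / (N - 1)) *\<^sub>R Dphi th (Yk i)) \<bullet> (A *v Dpsi th (Yk i))" for i
  have err_bd: "\<bar>err i\<bar> \<le> Q * m2 (Yk i) * \<delta>^2 + (K4 / c) * (2 * K3 / N^2 + (1 / N) * (f8 (Yk i) * \<delta> + L1 * N * K5 * \<delta>^2))"
    if i: "i < n" for i
  proof -
    define \<Delta> where "\<Delta> = lo i - th"
    define Di where "Di = Dphi th (Yk i)"
    define Hi where "Hi = Hphi th (Yk i)"
    define vi where "vi = Dpsi th (Yk i)"
    define di where "di = (1 / (N - 1)) *\<^sub>R Di"
    define Ri where "Ri = (\<Sum>k\<in>{..<n} - {i}. Dphi (lo i) (Yk k) - Dphi th (Yk k) - Hphi th (Yk k) *v \<Delta>)"
    have Ri_bd: "norm Ri \<le> L1 * (N * K5) * (norm \<Delta>)^2"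
    proof -
      have "norm Ri \<le> (\<Sum>k\<in>{..<n} - {i}. norm (Dphi (lo i) (Yk k) - Dphi th (Yk k) - Hphi th (Yk k) *v \<Delta>))"
        unfolding Ri_def by (rule norm_sum)
      also have "\<dots> \<le> (\<Sum>k\<in>{..<n} - {i}. L1 * m1 (Yk k) * (norm \<Delta>)^2)"
        by (intro sum_mono) (use remH i in \<open>auto simp: \<Delta>_def\<close>)
      also have "\<dots> \<le> (\<Sum>k<n. L1 * m1 (Yk k) * (norm \<Delta>)^2)"
        by (intro sum_mono2) (use L1 m1p in auto)
      also have "\<dots> = L1 * (\<Sum>k<n. m1 (Yk k)) * (norm \<Delta>)^2"
        by (simp add: sum_distrib_left sum_distrib_right ac_simps)
      also have "\<dots> \<le> L1 * (N * K5) * (norm \<Delta>)^2"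
      proof -
        have "(\<Sum>k<n. m1 (Yk k)) \<le> N * K5" using a5 N0 unfolding N_def by (simp add: field_simps)
        then show ?thesis using L1 by (intro mult_right_mono mult_left_mono) auto
      qed
      finally show ?thesis .
    qed
    have ident: "N *\<^sub>R (H *v \<Delta>) = Di - Ri + Hi *v \<Delta>"
    proof -
      have s1: "(\<Sum>k\<in>{..<n} - {i}. Dphi th (Yk k)) = - Di"
        using sum_remove_i[OF i, of "\<lambda>k. Dphi th (Yk k)"] gz unfolding Di_def by simp
      have s2: "(\<Sum>k\<in>{..<n} - {i}. Hphi th (Yk k) *v \<Delta>) = N *\<^sub>R (H *v \<Delta>) - Hi *v \<Delta>"
      proof -
        have "(\<Sum>k\<in>{..<n} - {i}. Hphi th (Yk k) *v \<Delta>) = (\<Sum>k<n. Hphi th (Yk k) *v \<Delta>) - Hi *v \<Delta>"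
          using sum_remove_i[OF i, of "\<lambda>k. Hphi th (Yk k) *v \<Delta>"] unfolding Hi_def by simp
        also have "(\<Sum>k<n. Hphi th (Yk k) *v \<Delta>) = (\<Sum>k<n. Hphi th (Yk k)) *v \<Delta>"
          by (simp add: matvec_sum)
        also have "\<dots> = N *\<^sub>R (H *v \<Delta>)" unfolding sumH by (simp add: scaleR_matrix_vector_assoc)
        finally show ?thesis .
      qed
      have "Ri = (\<Sum>k\<in>{..<n} - {i}. Dphi (lo i) (Yk k)) - (\<Sum>k\<in>{..<n} - {i}. Dphi th (Yk k))
                 - (\<Sum>k\<in>{..<n} - {i}. Hphi th (Yk k) *v \<Delta>)"
        unfolding Ri_def by (simp add: sum_subtractf)
      also have "\<dots> = Di - (N *\<^sub>R (H *v \<Delta>) - Hi *v \<Delta>)" using gzl[OF i] s1 s2 by simp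
      finally show ?thesis by (simp add: algebra_simps)
    qed
    have HD_lower: "c * norm \<Delta> \<le> norm (H *v \<Delta>)"
    proof -
      have "c * (norm \<Delta>)^2 \<le> \<Delta> \<bullet> (H *v \<Delta>)" by (rule pdH)
      also have "\<dots> \<le> norm \<Delta> * norm (H *v \<Delta>)" by (rule order_trans[OF abs_ge_self Cauchy_Schwarz_ineq2])
      finally have "c * (norm \<Delta>)^2 \<le> norm \<Delta> * norm (H *v \<Delta>)" .
      then show ?thesis by (cases "\<Delta> = 0") (auto simp: power2_eq_square)
    qed
    have sm: "L1 * K5 * norm \<Delta> \<le> c / 4" using small[OF i] unfolding \<Delta>_def .
    have fH: "fro Hi \<le> (c / 4) * N" using froHk[OF i] f8n[OF i] unfolding Hi_def N_def by linarith
    have Dnorm: "norm \<Delta> \<le> \<delta>"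
    proof -
      have "N * (c * norm \<Delta>) \<le> N * norm (H *v \<Delta>)" using HD_lower N0 by simp
      also have "\<dots> = norm (Di - Ri + Hi *v \<Delta>)" using ident[symmetric] N0 by simp
      also have "\<dots> \<le> norm Di + norm Ri + norm (Hi *v \<Delta>)"
        by (smt (verit) norm_triangle_ineq norm_triangle_ineq4)
      also have "\<dots> \<le> K3 + L1 * (N * K5) * (norm \<Delta>)^2 + fro Hi * norm \<Delta>"
        using bD[OF i] Ri_bd mv_bound[of Hi \<Delta>] unfolding Di_def by linarith
      also have "L1 * (N * K5) * (norm \<Delta>)^2 = N * (L1 * K5 * norm \<Delta>) * norm \<Delta>"
        by (simp add: power2_eq_square ac_simps)
      also have "\<dots> \<le> N * (c / 4) * norm \<Delta>" using sm N0 by (intro mult_right_mono mult_left_mono) auto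
      also have "fro Hi * norm \<Delta> \<le> (c / 4) * N * norm \<Delta>" using fH by (intro mult_right_mono) auto
      finally have "N * (c * norm \<Delta>) \<le> K3 + N * (c / 4) * norm \<Delta> + (c / 4) * N * norm \<Delta>" by simp
      then have "N * c * norm \<Delta> \<le> 2 * K3" by (simp add: algebra_simps)
      then show ?thesis unfolding \<delta>_def using c N0 by (simp add: field_simps)
    qed
    have AH: "A *v (H *v \<Delta>) = \<Delta>" using inv(2) by (simp add: matrix_vector_mul_assoc)
    have w_eq: "H *v \<Delta> - di = (1 / N - 1 / (N - 1)) *\<^sub>R Di + (1 / N) *\<^sub>R (Hi *v \<Delta> - Ri)"
    proof -
      have "H *v \<Delta> = (1 / N) *\<^sub>R (Di - Ri + Hi *v \<Delta>)" using ident N0 by (metis (no_types) divide_self_if less_irrefl one_divide_eq_0_iff scaleR_one scaleR_scaleR nonzero_divide_eq_eq)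
      then show ?thesis unfolding di_def by (simp add: algebra_simps)
    qed
    have w_bd: "norm (H *v \<Delta> - di) \<le> 2 * K3 / N^2 + (1 / N) * (f8 (Yk i) * \<delta> + L1 * N * K5 * \<delta>^2)"
    proof -
      have c1: "\<bar>1 / N - 1 / (N - 1)\<bar> \<le> 2 / N^2"
      proof -
        have "\<bar>1 / N - 1 / (N - 1)\<bar> = 1 / (N * (N - 1))" using N2 by (simp add: field_simps)
        also have "\<dots> \<le> 2 / N^2" using N2 by (simp add: field_simps power2_eq_square)
        finally show ?thesis .
      qed
      have "norm (H *v \<Delta> - di) \<le> \<bar>1 / N - 1 / (N - 1)\<bar> * norm Di + (1 / N) * norm (Hi *v \<Delta> - Ri)"
        unfolding w_eq using N0 by (smt (verit) norm_scaleR norm_triangle_ineq abs_of_pos divide_pos_pos zero_less_one)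
      also have "\<dots> \<le> (2 / N^2) * K3 + (1 / N) * (f8 (Yk i) * \<delta> + L1 * N * K5 * \<delta>^2)"
      proof (intro add_mono mult_mono)
        show "norm Di \<le> K3" using bD[OF i] unfolding Di_def .
        have "norm (Hi *v \<Delta> - Ri) \<le> fro Hi * norm \<Delta> + L1 * (N * K5) * (norm \<Delta>)^2"
          using mv_bound[of Hi \<Delta>] Ri_bd norm_triangle_ineq4[of "Hi *v \<Delta>" Ri] by linarith
        also have "\<dots> \<le> f8 (Yk i) * \<delta> + L1 * N * K5 * \<delta>^2"
        proof (intro add_mono)
          show "fro Hi * norm \<Delta> \<le> f8 (Yk i) * \<delta>"
            using froHk[OF i] Dnorm fro_nonneg[of Hi] \<delta>0 unfolding Hi_def by (intro mult_mono) auto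
          show "L1 * (N * K5) * (norm \<Delta>)^2 \<le> L1 * N * K5 * \<delta>^2"
            using Dnorm L1 K5 N0 by (simp add: mult.assoc mult_left_mono power_mono)
        qed
        finally show "norm (Hi *v \<Delta> - Ri) \<le> f8 (Yk i) * \<delta> + L1 * N * K5 * \<delta>^2" .
      qed (use c1 N0 in auto)
      finally show ?thesis by (simp add: ac_simps)
    qed
    have err_eq: "err i = (psi (g (lo i)) (Yk i) - psi (g th) (Yk i) - vi \<bullet> \<Delta>) + vi \<bullet> (A *v (H *v \<Delta> - di))"
    proof -
      have "di \<bullet> (A *v vi) = (A *v di) \<bullet> vi" by (rule sym_inner[OF symA])
      also have "A *v di = \<Delta> - A *v (H *v \<Delta> - di)" using AH by (simp add: matrix_vector_mult_diff_distrib)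
      finally have "di \<bullet> (A *v vi) = vi \<bullet> \<Delta> - vi \<bullet> (A *v (H *v \<Delta> - di))"
        by (simp add: inner_diff_left inner_diff_right inner_commute)
      then show ?thesis unfolding err_def di_def Di_def vi_def by simp
    qed
    have "\<bar>err i\<bar> \<le> \<bar>psi (g (lo i)) (Yk i) - psi (g th) (Yk i) - vi \<bullet> \<Delta>\<bar> + \<bar>vi \<bullet> (A *v (H *v \<Delta> - di))\<bar>"
      unfolding err_eq by (rule abs_triangle_ineq)
    also have "\<dots> \<le> Q * m2 (Yk i) * \<delta>^2 + K4 * ((2 * K3 / N^2 + (1 / N) * (f8 (Yk i) * \<delta> + L1 * N * K5 * \<delta>^2)) / c)"
    proof (intro add_mono)
      have "\<bar>psi (g (lo i)) (Yk i) - psi (g th) (Yk i) - vi \<bullet> \<Delta>\<bar> \<le> Q * m2 (Yk i) * (norm \<Delta>)^2"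
        using remV[OF i] unfolding vi_def \<Delta>_def .
      also have "\<dots> \<le> Q * m2 (Yk i) * \<delta>^2" using Q m2p Dnorm by (intro mult_left_mono power_mono) auto
      finally show "\<bar>psi (g (lo i)) (Yk i) - psi (g th) (Yk i) - vi \<bullet> \<Delta>\<bar> \<le> Q * m2 (Yk i) * \<delta>^2" .
      have "\<bar>vi \<bullet> (A *v (H *v \<Delta> - di))\<bar> \<le> norm vi * norm (A *v (H *v \<Delta> - di))" by (rule Cauchy_Schwarz_ineq2)
      also have "\<dots> \<le> K4 * ((2 * K3 / N^2 + (1 / N) * (f8 (Yk i) * \<delta> + L1 * N * K5 * \<delta>^2)) / c)"
      proof (intro mult_mono)
        show "norm vi \<le> K4" using bV[OF i] unfolding vi_def .
        show "norm (A *v (H *v \<Delta> - di)) \<le> (2 * K3 / N^2 + (1 / N) * (f8 (Yk i) * \<delta> + L1 * N * K5 * \<delta>^2)) / c"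
          using inv(3)[of "H *v \<Delta> - di"] w_bd c by (smt (verit) divide_right_mono)
      qed (use K4 in auto)
      finally show "\<bar>vi \<bullet> (A *v (H *v \<Delta> - di))\<bar> \<le> K4 * ((2 * K3 / N^2 + (1 / N) * (f8 (Yk i) * \<delta> + L1 * N * K5 * \<delta>^2)) / c)" .
    qed
    finally show ?thesis by (simp add: ac_simps)
  qed
  define \<alpha> where "\<alpha> = Q * \<delta>^2"
  define \<beta> where "\<beta> = (K4 / c) * (2 * K3 / N^2 + L1 * K5 * \<delta>^2)"
  define \<gamma> where "\<gamma> = (K4 / c) * (\<delta> / N)"
  have \<alpha>0: "\<alpha> \<ge> 0" unfolding \<alpha>_def using Q by simp
  have \<gamma>0: "\<gamma> \<ge> 0" unfolding \<gamma>_def using K4 c \<delta>0 N0 by simp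
  have bform: "Q * m2 (Yk i) * \<delta>^2 + (K4 / c) * (2 * K3 / N^2 + (1 / N) * (f8 (Yk i) * \<delta> + L1 * N * K5 * \<delta>^2))
      = \<alpha> * m2 (Yk i) + \<beta> + \<gamma> * f8 (Yk i)" for i
    unfolding \<alpha>_def \<beta>_def \<gamma>_def using N0 c by (simp add: field_simps power2_eq_square)
  have T: "trace (matrix_inv H ** (\<chi> a b. (1 / real n) * (\<Sum>i<n. Dpsi th (Yk i) $ a * ((1 / (real n - 1)) *\<^sub>R Dphi th (Yk i)) $ b)))
      = (1 / N) * (\<Sum>i<n. ((1 / (N - 1)) *\<^sub>R Dphi th (Yk i)) \<bullet> (A *v Dpsi th (Yk i)))"
    unfolding A_def N_def by (rule trace_formula)
  have eq: "(1 / real n) * (\<Sum>i<n. psi (g (lo i)) (Yk i)) -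
          ((1 / real n) * (\<Sum>i<n. psi (g th) (Yk i)) +
           trace (matrix_inv H ** (\<chi> a b. (1 / real n) * (\<Sum>i<n. Dpsi th (Yk i) $ a * ((1 / (real n - 1)) *\<^sub>R Dphi th (Yk i)) $ b))))
       = (1 / N) * (\<Sum>i<n. err i)"
    unfolding T unfolding err_def N_def by (simp add: sum_subtractf right_diff_distrib)
  have "\<bar>(1 / N) * (\<Sum>i<n. err i)\<bar> \<le> (1 / N) * (\<Sum>i<n. \<bar>err i\<bar>)"
    using N0 sum_abs[of err "{..<n}"] by (simp add: abs_mult divide_right_mono)
  also have "\<dots> \<le> (1 / N) * (\<Sum>i<n. \<alpha> * m2 (Yk i) + \<beta> + \<gamma> * f8 (Yk i))"
    using N0 err_bd bform by (intro mult_left_mono sum_mono) auto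
  also have "\<dots> = \<alpha> * ((1 / N) * (\<Sum>i<n. m2 (Yk i))) + \<beta> + \<gamma> * ((1 / N) * (\<Sum>i<n. f8 (Yk i)))"
    using N0 unfolding N_def by (simp add: sum.distrib sum_distrib_left field_simps)
  also have "\<dots> \<le> \<alpha> * K6 + \<beta> + \<gamma> * K7"
    using a6 a7 \<alpha>0 \<gamma>0 unfolding N_def by (intro add_mono mult_left_mono) auto
  also have "\<dots> = (Q * K6 * (2 * K3 / c)^2 + (K4 / c) * (2 * K3 + K7 * (2 * K3 / c) + L1 * K5 * (2 * K3 / c)^2)) * (1 / N^2)"
    unfolding \<alpha>_def \<beta>_def \<gamma>_def \<delta>_def using N0 c by (simp add: field_simps power2_eq_square)
  finally show ?thesis unfolding eq N_def .
qed

theorem mainTheorem3: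
  fixes M :: "'a measure" and S :: "'y measure" and D :: "'y measure"
    and Y :: "nat \<Rightarrow> 'a \<Rightarrow> 'y"
    and \<Theta> :: "(real^'p) set" and \<theta>0 :: "real^'p"
    and phi :: "real^'p \<Rightarrow> 'y \<Rightarrow> real"
    and Dphi :: "real^'p \<Rightarrow> 'y \<Rightarrow> real^'p"
    and Hphi :: "real^'p \<Rightarrow> 'y \<Rightarrow> real^'p^'p"
    and Tphi :: "real^'p \<Rightarrow> 'y \<Rightarrow> real^'p \<Rightarrow> real^'p^'p"
    and g :: "real^'p \<Rightarrow> 'y \<Rightarrow> real"
    and psi :: "('y \<Rightarrow> real) \<Rightarrow> 'y \<Rightarrow> real"
    and Dpsi :: "real^'p \<Rightarrow> 'y \<Rightarrow> real^'p"
    and Hpsi :: "real^'p \<Rightarrow> 'y \<Rightarrow> real^'p^'p"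
    and hat :: "nat \<Rightarrow> 'a \<Rightarrow> real^'p"
    and loo :: "nat \<Rightarrow> nat \<Rightarrow> 'a \<Rightarrow> real^'p"
  assumes P: "prob_space M"
    \<comment> \<open>Y_0, Y_1, ... i.i.d. with common law D (the law with density f*)\<close>
    and indep: "prob_space.indep_vars M (\<lambda>_. S) Y UNIV"
    and ident: "\<And>i. distr M S (Y i) = D"
    \<comment> \<open>phi three times continuously differentiable in theta\<close>
    and phi_D1: "\<And>\<theta> y. \<theta> \<in> interior \<Theta> \<Longrightarrow> y \<in> space S \<Longrightarrow>
                   ((\<lambda>t. phi t y) has_derivative (\<lambda>h. Dphi \<theta> y \<bullet> h)) (at \<theta>)"
    and phi_D2: "\<And>\<theta> y. \<theta> \<in> interior \<Theta> \<Longrightarrow> y \<in> space S \<Longrightarrow>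
                   ((\<lambda>t. Dphi t y) has_derivative (\<lambda>h. Hphi \<theta> y *v h)) (at \<theta>)"
    and phi_D3: "\<And>\<theta> y. \<theta> \<in> interior \<Theta> \<Longrightarrow> y \<in> space S \<Longrightarrow>
                   ((\<lambda>t. Hphi t y) has_derivative Tphi \<theta> y) (at \<theta>)"
    and phi_D3_cont: "\<And>y i j k. y \<in> space S \<Longrightarrow>
                   continuous_on (interior \<Theta>) (\<lambda>t. Tphi t y (axis k 1) $ i $ j)"
    \<comment> \<open>third derivatives locally dominated near theta0 by an integrable function\<close>
    and phi_dom: "\<exists>r>0. \<exists>m. integrable D m \<and> ball \<theta>0 r \<subseteq> \<Theta> \<and>
                   (\<forall>t\<in>ball \<theta>0 r. \<forall>y\<in>space S. \<forall>i j k. \<bar>Tphi t y (axis k 1) $ i $ j\<bar> \<le> m y)"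
    \<comment> \<open>theta \<mapsto> psi(g^theta, y) twice continuously differentiable\<close>
    and psi_D1: "\<And>\<theta> y. \<theta> \<in> interior \<Theta> \<Longrightarrow> y \<in> space S \<Longrightarrow>
                   ((\<lambda>t. psi (g t) y) has_derivative (\<lambda>h. Dpsi \<theta> y \<bullet> h)) (at \<theta>)"
    and psi_D2: "\<And>\<theta> y. \<theta> \<in> interior \<Theta> \<Longrightarrow> y \<in> space S \<Longrightarrow>
                   ((\<lambda>t. Dpsi t y) has_derivative (\<lambda>h. Hpsi \<theta> y *v h)) (at \<theta>)"
    and psi_D2_cont: "\<And>y i j. y \<in> space S \<Longrightarrow>
                   continuous_on (interior \<Theta>) (\<lambda>t. Hpsi t y $ i $ j)"
    and psi_dom: "\<exists>r>0. \<exists>m. integrable D m \<and> ball \<theta>0 r \<subseteq> \<Theta> \<and>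
                   (\<forall>t\<in>ball \<theta>0 r. \<forall>y\<in>space S. \<forall>i j. \<bar>Hpsi t y $ i $ j\<bar> \<le> m y)"
    \<comment> \<open>theta0 = argmin Phi_infty, interior, with positive definite expected Hessian\<close>
    and Phi_inf_def: "\<And>\<theta>. \<theta> \<in> \<Theta> \<Longrightarrow> integrable D (phi \<theta>)"
    and theta0_in: "\<theta>0 \<in> interior \<Theta>"
    and theta0_min: "\<And>\<theta>. \<theta> \<in> \<Theta> \<Longrightarrow> integral\<^sup>L D (phi \<theta>0) \<le> integral\<^sup>L D (phi \<theta>)"
    and H0_int: "\<And>i j. integrable D (\<lambda>y. Hphi \<theta>0 y $ i $ j)"
    and H0_pd: "\<And>x. x \<noteq> 0 \<Longrightarrow>
                   x \<bullet> ((\<chi> i j. integral\<^sup>L D (\<lambda>y. Hphi \<theta>0 y $ i $ j)) *v x) > 0"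
    \<comment> \<open>hat theta and all hat theta_{-i} exist, are interior minimisers\<close>
    and hat_in: "\<And>n \<omega>. n \<ge> 2 \<Longrightarrow> \<omega> \<in> space M \<Longrightarrow> hat n \<omega> \<in> interior \<Theta>"
    and hat_min: "\<And>n \<omega> \<theta>. n \<ge> 2 \<Longrightarrow> \<omega> \<in> space M \<Longrightarrow> \<theta> \<in> \<Theta> \<Longrightarrow>
                   PhiEmp phi Y n \<omega> (hat n \<omega>) \<le> PhiEmp phi Y n \<omega> \<theta>"
    and loo_in: "\<And>n i \<omega>. n \<ge> 2 \<Longrightarrow> i < n \<Longrightarrow> \<omega> \<in> space M \<Longrightarrow> loo n i \<omega> \<in> interior \<Theta>"
    and loo_min: "\<And>n i \<omega> \<theta>. n \<ge> 2 \<Longrightarrow> i < n \<Longrightarrow> \<omega> \<in> space M \<Longrightarrow> \<theta> \<in> \<Theta> \<Longrightarrow>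
                   PhiLoo phi Y n i \<omega> (loo n i \<omega>) \<le> PhiLoo phi Y n i \<omega> \<theta>"
    \<comment> \<open>root-n rates\<close>
    and hat_rate: "bigOp M (\<lambda>n \<omega>. norm (hat n \<omega> - \<theta>0)) (\<lambda>n. 1 / sqrt (real n))"
    and loo_rate: "bigOp M (\<lambda>n \<omega>. Max ((\<lambda>i. norm (loo n i \<omega> - \<theta>0)) ` {..<n}))
                     (\<lambda>n. 1 / sqrt (real n))"
    \<comment> \<open>bounded gradients at hat theta\<close>
    and Dphi_bd: "bigOp M (\<lambda>n \<omega>. Max ((\<lambda>i. norm (Dphi (hat n \<omega>) (Y i \<omega>))) ` {..<n})) (\<lambda>n. 1)"
    and Dpsi_bd: "bigOp M (\<lambda>n \<omega>. Max ((\<lambda>i. norm (Dpsi (hat n \<omega>) (Y i \<omega>))) ` {..<n})) (\<lambda>n. 1)"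
  shows "bigOp M (\<lambda>n \<omega>. CV psi g Y loo n \<omega> - UACV psi g Dpsi Dphi Hphi Y hat n \<omega>)
                 (\<lambda>n. 1 / (real n)^2)"
proof -
  interpret prob_space M by (rule P)
  have Ym: "\<And>i. Y i \<in> measurable M S" using indep unfolding indep_vars_def2 by auto
  have YS: "\<And>i \<omega>. \<omega> \<in> space M \<Longrightarrow> Y i \<omega> \<in> space S" using measurable_space[OF Ym] by blast
  have sD: "space D = space S" using ident[of 0, symmetric] by simp
  define P where "P = real CARD('p)"
  have P1: "P \<ge> 1" unfolding P_def by simp
  obtain r1 m1 where r1: "r1 > 0" "integrable D m1" "ball \<theta>0 r1 \<subseteq> \<Theta>"
    and m1b: "\<And>t y i j k. t \<in> ball \<theta>0 r1 \<Longrightarrow> y \<in> space S \<Longrightarrow> \<bar>Tphi t y (axis k 1) $ i $ j\<bar> \<le> m1 y"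
    using phi_dom by blast
  obtain r2 m2 where r2: "r2 > 0" "integrable D m2" "ball \<theta>0 r2 \<subseteq> \<Theta>"
    and m2b: "\<And>t y i j. t \<in> ball \<theta>0 r2 \<Longrightarrow> y \<in> space S \<Longrightarrow> \<bar>Hpsi t y $ i $ j\<bar> \<le> m2 y"
    using psi_dom by blast
  have m1p: "\<And>y. y \<in> space S \<Longrightarrow> m1 y \<ge> 0"
    using m1b[of \<theta>0] r1(1) by (meson abs_ge_zero centre_in_ball order_trans)
  have m2p: "\<And>y. y \<in> space S \<Longrightarrow> m2 y \<ge> 0"
    using m2b[of \<theta>0] r2(1) by (meson abs_ge_zero centre_in_ball order_trans)
  define \<rho> where "\<rho> = min r1 r2"
  have \<rho>: "\<rho> > 0" unfolding \<rho>_def using r1 r2 by simp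
  have ball1: "ball \<theta>0 \<rho> \<subseteq> ball \<theta>0 r1" "ball \<theta>0 \<rho> \<subseteq> ball \<theta>0 r2" unfolding \<rho>_def by auto
  have ballint: "ball \<theta>0 \<rho> \<subseteq> interior \<Theta>"
    using ball1(1) r1(3) by (meson interior_maximal open_ball order_trans)
  define L1 where "L1 = P^5"
  have L1: "L1 \<ge> 0" unfolding L1_def using P1 by simp
  have lipH: "fro (Hphi s y - Hphi t y) \<le> L1 * m1 y * norm (s - t)"
    if ts: "t \<in> ball \<theta>0 \<rho>" "s \<in> ball \<theta>0 \<rho>" and y: "y \<in> space S" for t s y
  proof -
    have "norm (Hphi s y - Hphi t y) \<le> (P^3 * m1 y) * norm (s - t)"
    proof (rule lipschitz_from_deriv[OF convex_ball ts(1) ts(2)])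
      show "\<And>x. x \<in> ball \<theta>0 \<rho> \<Longrightarrow> ((\<lambda>u. Hphi u y) has_derivative Tphi x y) (at x)"
        using phi_D3 ballint y by blast
      show "\<And>x. x \<in> ball \<theta>0 \<rho> \<Longrightarrow> onorm (Tphi x y) \<le> P^3 * m1 y"
        unfolding P_def
      proof (rule tensor_onorm)
        fix x assume x: "x \<in> ball \<theta>0 \<rho>"
        show "bounded_linear (Tphi x y)"
          using phi_D3[of x y] x ballint y by (blast intro: has_derivative_bounded_linear)
        show "\<And>i j k. \<bar>Tphi x y (axis k 1) $ i $ j\<bar> \<le> m1 y" using m1b x ball1 y by blast
      qed
    qed
    moreover have "fro (Hphi s y - Hphi t y) \<le> P * P * norm (Hphi s y - Hphi t y)"
      using fro_le_norm[of "Hphi s y - Hphi t y"] unfolding P_def by simp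
    ultimately have "fro (Hphi s y - Hphi t y) \<le> P * P * ((P^3 * m1 y) * norm (s - t))"
      using P1 by (smt (verit) mult_left_mono mult_nonneg_nonneg)
    then show ?thesis unfolding L1_def by (simp add: power_def ac_simps eval_nat_numeral)
  qed
  have remH: "norm (Dphi s y - Dphi t y - Hphi t y *v (s - t)) \<le> L1 * m1 y * (norm (s - t))^2"
    if ts: "t \<in> ball \<theta>0 \<rho>" "s \<in> ball \<theta>0 \<rho>" and y: "y \<in> space S" for t s y
  proof (rule lin_rem[OF convex_ball ts(1) ts(2), where f'="\<lambda>x h. Hphi x y *v h"])
    show "\<And>x. x \<in> ball \<theta>0 \<rho> \<Longrightarrow> ((\<lambda>u. Dphi u y) has_derivative (\<lambda>h. Hphi x y *v h)) (at x)"
      using phi_D2 ballint y by blast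
    show "\<And>x. x \<in> ball \<theta>0 \<rho> \<Longrightarrow> onorm (\<lambda>h. Hphi x y *v h - Hphi t y *v h) \<le> L1 * m1 y * norm (x - t)"
    proof -
      fix x assume x: "x \<in> ball \<theta>0 \<rho>"
      have "(\<lambda>h. Hphi x y *v h - Hphi t y *v h) = (\<lambda>h. (Hphi x y - Hphi t y) *v h)"
        by (simp add: matrix_vector_mult_diff_rdistrib)
      then have "onorm (\<lambda>h. Hphi x y *v h - Hphi t y *v h) \<le> fro (Hphi x y - Hphi t y)"
        using onorm_mv by metis
      also have "\<dots> \<le> L1 * m1 y * norm (x - t)" by (rule lipH[OF ts(1) x y])
      finally show "onorm (\<lambda>h. Hphi x y *v h - Hphi t y *v h) \<le> L1 * m1 y * norm (x - t)" .
    qed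
    show "L1 * m1 y \<ge> 0" using L1 m1p y by simp
  qed
  have lipV: "norm (Dpsi s y - Dpsi t y) \<le> (P^2 * m2 y) * norm (s - t)"
    if ts: "t \<in> ball \<theta>0 \<rho>" "s \<in> ball \<theta>0 \<rho>" and y: "y \<in> space S" for t s y
  proof (rule lipschitz_from_deriv[OF convex_ball ts(1) ts(2)])
    show "\<And>x. x \<in> ball \<theta>0 \<rho> \<Longrightarrow> ((\<lambda>u. Dpsi u y) has_derivative (\<lambda>h. Hpsi x y *v h)) (at x)"
      using psi_D2 ballint y by blast
    show "\<And>x. x \<in> ball \<theta>0 \<rho> \<Longrightarrow> onorm (\<lambda>h. Hpsi x y *v h) \<le> P^2 * m2 y"
      unfolding P_def by (rule mat_onorm) (use m2b ball1 y in blast)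
  qed
  have remV: "\<bar>psi (g s) y - psi (g t) y - Dpsi t y \<bullet> (s - t)\<bar> \<le> (P^2 * m2 y) * (norm (s - t))^2"
    if ts: "t \<in> ball \<theta>0 \<rho>" "s \<in> ball \<theta>0 \<rho>" and y: "y \<in> space S" for t s y
  proof -
    have "norm (psi (g s) y - psi (g t) y - Dpsi t y \<bullet> (s - t)) \<le> (P^2 * m2 y) * (norm (s - t))^2"
    proof (rule lin_rem[OF convex_ball ts(1) ts(2), where f'="\<lambda>x h. Dpsi x y \<bullet> h"])
      show "\<And>x. x \<in> ball \<theta>0 \<rho> \<Longrightarrow> ((\<lambda>u. psi (g u) y) has_derivative (\<lambda>h. Dpsi x y \<bullet> h)) (at x)"
        using psi_D1 ballint y by blast
      show "\<And>x. x \<in> ball \<theta>0 \<rho> \<Longrightarrow> onorm (\<lambda>h. Dpsi x y \<bullet> h - Dpsi t y \<bullet> h) \<le> (P^2 * m2 y) * norm (x - t)"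
      proof -
        fix x assume x: "x \<in> ball \<theta>0 \<rho>"
        have "onorm (\<lambda>h. Dpsi x y \<bullet> h - Dpsi t y \<bullet> h) \<le> norm (Dpsi x y - Dpsi t y)"
        proof (rule onorm_le)
          fix h
          have "norm (Dpsi x y \<bullet> h - Dpsi t y \<bullet> h) = \<bar>(Dpsi x y - Dpsi t y) \<bullet> h\<bar>" by (simp add: inner_diff_left)
          also have "\<dots> \<le> norm (Dpsi x y - Dpsi t y) * norm h" by (rule Cauchy_Schwarz_ineq2)
          finally show "norm (Dpsi x y \<bullet> h - Dpsi t y \<bullet> h) \<le> norm (Dpsi x y - Dpsi t y) * norm h" .
        qed
        also have "\<dots> \<le> (P^2 * m2 y) * norm (x - t)" by (rule lipV[OF ts(1) x y])
        finally show "onorm (\<lambda>h. Dpsi x y \<bullet> h - Dpsi t y \<bullet> h) \<le> (P^2 * m2 y) * norm (x - t)" .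
      qed
      show "P^2 * m2 y \<ge> 0" using m2p y by simp
    qed
    then show ?thesis by simp
  qed
  have symH: "transpose (Hphi t y) = Hphi t y" if t: "t \<in> interior \<Theta>" and y: "y \<in> space S" for t y
  proof -
    have hs: "(Hphi t y *v k) \<bullet> h = (Hphi t y *v h) \<bullet> k" for h k
      by (rule hess_sym[where f="\<lambda>u. phi u y" and G="\<lambda>u. Dphi u y" and U="interior \<Theta>"])
         (use t y phi_D1 phi_D2 in auto)
    have ent: "(B *v axis j 1) \<bullet> axis i 1 = B $ i $ j" for B :: "real^'p^'p" and i j
      by (simp add: inner_axis matrix_vector_mult_basis column_def)
    have "Hphi t y $ i $ j = Hphi t y $ j $ i" for i j
      using hs[of "axis i 1" "axis j 1"] ent[of "Hphi t y"] by metis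
    then show ?thesis by (simp add: transpose_def vec_eq_iff)
  qed
  have gz_hat: "(\<Sum>k<n. Dphi (hat n \<omega>) (Y k \<omega>)) = 0" if nw: "n \<ge> 2" "\<omega> \<in> space M" for n \<omega>
  proof -
    have d0: "((\<lambda>\<theta>. (1 / real n) * (\<Sum>k<n. phi \<theta> (Y k \<omega>))) has_derivative
              (\<lambda>h. (1 / real n) * (\<Sum>k<n. Dphi (hat n \<omega>) (Y k \<omega>) \<bullet> h))) (at (hat n \<omega>))"
      by (intro has_derivative_mult_right has_derivative_sum) (use phi_D1 hat_in YS nw in auto)
    have "(\<lambda>h. (1 / real n) * (\<Sum>k<n. Dphi (hat n \<omega>) (Y k \<omega>) \<bullet> h))
          = (\<lambda>h. ((1 / real n) *\<^sub>R (\<Sum>k<n. Dphi (hat n \<omega>) (Y k \<omega>))) \<bullet> h)"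
      by (simp add: inner_sum_left)
    with d0 have d: "((\<lambda>\<theta>. PhiEmp phi Y n \<omega> \<theta>) has_derivative
              (\<lambda>h. ((1 / real n) *\<^sub>R (\<Sum>k<n. Dphi (hat n \<omega>) (Y k \<omega>))) \<bullet> h)) (at (hat n \<omega>))"
      unfolding PhiEmp_def by simp
    have "(1 / real n) *\<^sub>R (\<Sum>k<n. Dphi (hat n \<omega>) (Y k \<omega>)) = 0"
      by (rule grad_zero[OF d hat_in[OF nw]]) (use hat_min nw in auto)
    then show ?thesis using nw by simp
  qed
  have gz_loo: "(\<Sum>k\<in>{..<n} - {i}. Dphi (loo n i \<omega>) (Y k \<omega>)) = 0"
    if nw: "n \<ge> 2" "i < n" "\<omega> \<in> space M" for n i \<omega>
  proof -
    have d0: "((\<lambda>\<theta>. (1 / (real n - 1)) * (\<Sum>k\<in>{..<n} - {i}. phi \<theta> (Y k \<omega>))) has_derivative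
              (\<lambda>h. (1 / (real n - 1)) * (\<Sum>k\<in>{..<n} - {i}. Dphi (loo n i \<omega>) (Y k \<omega>) \<bullet> h))) (at (loo n i \<omega>))"
      by (intro has_derivative_mult_right has_derivative_sum) (use phi_D1 loo_in YS nw in auto)
    have "(\<lambda>h. (1 / (real n - 1)) * (\<Sum>k\<in>{..<n} - {i}. Dphi (loo n i \<omega>) (Y k \<omega>) \<bullet> h))
          = (\<lambda>h. ((1 / (real n - 1)) *\<^sub>R (\<Sum>k\<in>{..<n} - {i}. Dphi (loo n i \<omega>) (Y k \<omega>))) \<bullet> h)"
      by (simp add: inner_sum_left)
    with d0 have d: "((\<lambda>\<theta>. PhiLoo phi Y n i \<omega> \<theta>) has_derivative
              (\<lambda>h. ((1 / (real n - 1)) *\<^sub>R (\<Sum>k\<in>{..<n} - {i}. Dphi (loo n i \<omega>) (Y k \<omega>))) \<bullet> h)) (at (loo n i \<omega>))"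
      unfolding PhiLoo_def by simp
    have "(1 / (real n - 1)) *\<^sub>R (\<Sum>k\<in>{..<n} - {i}. Dphi (loo n i \<omega>) (Y k \<omega>)) = 0"
      by (rule grad_zero[OF d loo_in[OF nw]]) (use loo_min nw in auto)
    moreover have "1 / (real n - 1) \<noteq> 0" using nw by simp
    ultimately show ?thesis by simp
  qed
  define h0 where "h0 y = fro (Hphi \<theta>0 y)" for y
  have h0int: "integrable D h0" unfolding h0_def fro_def using H0_int by auto
  have h0p: "\<And>y. h0 y \<ge> 0" unfolding h0_def by (rule fro_nonneg)
  define E0 where "E0 = (\<chi> i j. integral\<^sup>L D (\<lambda>y. Hphi \<theta>0 y $ i $ j))"
  obtain c0 where c0: "c0 > 0" "\<And>x. x \<bullet> (E0 *v x) \<ge> c0 * (norm x)^2"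
    using pd_uniform[of E0] H0_pd unfolding E0_def by blast
  define c where "c = c0 / 2"
  have c: "c > 0" unfolding c_def using c0 by simp
  define f8 where "f8 y = h0 y + L1 * \<rho> * m1 y" for y
  have f8int: "integrable D f8" unfolding f8_def using h0int r1(2) by auto
  have f8p: "\<And>y. y \<in> space S \<Longrightarrow> f8 y \<ge> 0" unfolding f8_def using h0p m1p L1 \<rho> by simp
  define \<eta>9 where "\<eta>9 = c0 / (4 * P^2)"
  have \<eta>9: "\<eta>9 > 0" unfolding \<eta>9_def using c0 P1 by simp
  define Q where "Q = P^2"
  show ?thesis
  proof (rule hpe_bigOp)
    fix e :: real assume e: "e > 0"
    define e' where "e' = e / 9"
    have e': "e' > 0" unfolding e'_def using e by simp
    obtain K1 where E1: "hpe M e' (\<lambda>n \<omega>. \<bar>norm (hat n \<omega> - \<theta>0)\<bar> \<le> K1 * (1 / sqrt (real n)))"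
      using bigOp_hpe[OF hat_rate e'] by blast
    obtain K2 where E2: "hpe M e' (\<lambda>n \<omega>. \<bar>Max ((\<lambda>i. norm (loo n i \<omega> - \<theta>0)) ` {..<n})\<bar> \<le> K2 * (1 / sqrt (real n)))"
      using bigOp_hpe[OF loo_rate e'] by blast
    obtain K3 where E3: "hpe M e' (\<lambda>n \<omega>. \<bar>Max ((\<lambda>i. norm (Dphi (hat n \<omega>) (Y i \<omega>))) ` {..<n})\<bar> \<le> K3 * 1)"
      using bigOp_hpe[OF Dphi_bd e'] by blast
    obtain K4 where E4: "hpe M e' (\<lambda>n \<omega>. \<bar>Max ((\<lambda>i. norm (Dpsi (hat n \<omega>) (Y i \<omega>))) ` {..<n})\<bar> \<le> K4 * 1)"
      using bigOp_hpe[OF Dpsi_bd e'] by blast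
    obtain K5 where E5: "hpe M e' (\<lambda>n \<omega>. (1 / real n) * (\<Sum>i<n. m1 (Y i \<omega>)) \<le> K5)"
    proof -
      have "\<exists>K. hpe M e' (\<lambda>n \<omega>. (1 / real n) * (\<Sum>i<n. m1 (Y i \<omega>)) \<le> K)"
        by (rule avg_markov[OF P]) (use Ym ident r1(2) m1p e' in auto)
      then show ?thesis using that by blast
    qed
    obtain K6 where E6: "hpe M e' (\<lambda>n \<omega>. (1 / real n) * (\<Sum>i<n. m2 (Y i \<omega>)) \<le> K6)"
    proof -
      have "\<exists>K. hpe M e' (\<lambda>n \<omega>. (1 / real n) * (\<Sum>i<n. m2 (Y i \<omega>)) \<le> K)"
        by (rule avg_markov[OF P]) (use Ym ident r2(2) m2p e' in auto)
      then show ?thesis using that by blast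
    qed
    obtain K7 where E7: "hpe M e' (\<lambda>n \<omega>. (1 / real n) * (\<Sum>i<n. f8 (Y i \<omega>)) \<le> K7)"
    proof -
      have "\<exists>K. hpe M e' (\<lambda>n \<omega>. (1 / real n) * (\<Sum>i<n. f8 (Y i \<omega>)) \<le> K)"
        by (rule avg_markov[OF P]) (use Ym ident f8int f8p e' in auto)
      then show ?thesis using that by blast
    qed
    have E8: "hpe M e' (\<lambda>n \<omega>. \<forall>i<n. f8 (Y i \<omega>) \<le> (c / 4) * real n)"
      by (rule max_small[OF P]) (use Ym ident f8int f8p e' c in auto)
    have "hp M (\<lambda>n \<omega>. \<forall>ij\<in>(UNIV :: ('p \<times> 'p) set).
        \<bar>(1 / real n) * (\<Sum>k<n. Hphi \<theta>0 (Y k \<omega>) $ fst ij $ snd ij) - integral\<^sup>L D (\<lambda>y. Hphi \<theta>0 y $ fst ij $ snd ij)\<bar> \<le> \<eta>9)"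
    proof (rule hp_ball[OF P])
      show "finite (UNIV :: ('p \<times> 'p) set)" by simp
      fix ij :: "'p \<times> 'p"
      show "hp M (\<lambda>n \<omega>. \<bar>(1 / real n) * (\<Sum>k<n. Hphi \<theta>0 (Y k \<omega>) $ fst ij $ snd ij) - integral\<^sup>L D (\<lambda>y. Hphi \<theta>0 y $ fst ij $ snd ij)\<bar> \<le> \<eta>9)"
        unfolding hp_def using wlln[OF P indep ident H0_int[of "fst ij" "snd ij"] \<eta>9] by blast
    qed
    then have E9: "hpe M e' (\<lambda>n \<omega>. \<forall>ij\<in>(UNIV :: ('p \<times> 'p) set).
        \<bar>(1 / real n) * (\<Sum>k<n. Hphi \<theta>0 (Y k \<omega>) $ fst ij $ snd ij) - integral\<^sup>L D (\<lambda>y. Hphi \<theta>0 y $ fst ij $ snd ij)\<bar> \<le> \<eta>9)"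
      unfolding hp_def using e' by blast
    have Eall: "hpe M (e' + (e' + (e' + (e' + (e' + (e' + (e' + (e' + e'))))))))
      (\<lambda>n \<omega>. \<bar>norm (hat n \<omega> - \<theta>0)\<bar> \<le> K1 * (1 / sqrt (real n)) \<and>
         (\<bar>Max ((\<lambda>i. norm (loo n i \<omega> - \<theta>0)) ` {..<n})\<bar> \<le> K2 * (1 / sqrt (real n)) \<and>
         (\<bar>Max ((\<lambda>i. norm (Dphi (hat n \<omega>) (Y i \<omega>))) ` {..<n})\<bar> \<le> K3 * 1 \<and>
         (\<bar>Max ((\<lambda>i. norm (Dpsi (hat n \<omega>) (Y i \<omega>))) ` {..<n})\<bar> \<le> K4 * 1 \<and>
         ((1 / real n) * (\<Sum>i<n. m1 (Y i \<omega>)) \<le> K5 \<and>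
         ((1 / real n) * (\<Sum>i<n. m2 (Y i \<omega>)) \<le> K6 \<and>
         ((1 / real n) * (\<Sum>i<n. f8 (Y i \<omega>)) \<le> K7 \<and>
         ((\<forall>i<n. f8 (Y i \<omega>) \<le> (c / 4) * real n) \<and>
         (\<forall>ij\<in>(UNIV :: ('p \<times> 'p) set).
            \<bar>(1 / real n) * (\<Sum>k<n. Hphi \<theta>0 (Y k \<omega>) $ fst ij $ snd ij) - integral\<^sup>L D (\<lambda>y. Hphi \<theta>0 y $ fst ij $ snd ij)\<bar> \<le> \<eta>9)))))))))"
      by (intro hpe_conj[OF P] E1 E2 E3 E4 E5 E6 E7 E8 E9)
    obtain Na where Na: "\<And>n. n \<ge> Na \<Longrightarrow> K1 / sqrt (real n) \<le> \<rho> / 2" using sqrt_small[of "\<rho> / 2"] \<rho> by auto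
    obtain Nb where Nb: "\<And>n. n \<ge> Nb \<Longrightarrow> K2 / sqrt (real n) \<le> \<rho> / 2" using sqrt_small[of "\<rho> / 2"] \<rho> by auto
    have "\<exists>N::nat. \<forall>n\<ge>N. (L1 * K5 * K1) / sqrt (real n) \<le> c0 / 4" by (rule sqrt_small) (use c0(1) in simp)
    then obtain Nc where Nc: "\<And>n. n \<ge> Nc \<Longrightarrow> (L1 * K5 * K1) / sqrt (real n) \<le> c0 / 4" by blast
    have "\<exists>N::nat. \<forall>n\<ge>N. (L1 * K5 * (K1 + K2)) / sqrt (real n) \<le> c / 4" by (rule sqrt_small) (use c in simp)
    then obtain Nd where Nd: "\<And>n. n \<ge> Nd \<Longrightarrow> (L1 * K5 * (K1 + K2)) / sqrt (real n) \<le> c / 4" by blast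
    define N0 where "N0 = max (max Na Nb) (max (max Nc Nd) 2)"
    define Kf where "Kf = Q * K6 * (2 * K3 / c)^2 + (K4 / c) * (2 * K3 + K7 * (2 * K3 / c) + L1 * K5 * (2 * K3 / c)^2)"
    show "\<exists>K. hpe M e (\<lambda>n \<omega>. \<bar>CV psi g Y loo n \<omega> - UACV psi g Dpsi Dphi Hphi Y hat n \<omega>\<bar> \<le> K * (1 / (real n)^2))"
    proof (intro exI[of _ Kf] hpe_mono[OF Eall, where ?N0.0 = N0])
      show "e' + (e' + (e' + (e' + (e' + (e' + (e' + (e' + e'))))))) \<le> e" unfolding e'_def by simp
      fix n \<omega> assume n: "n \<ge> N0" and w: "\<omega> \<in> space M" and ev: "\<bar>norm (hat n \<omega> - \<theta>0)\<bar> \<le> K1 * (1 / sqrt (real n)) \<and>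
         (\<bar>Max ((\<lambda>i. norm (loo n i \<omega> - \<theta>0)) ` {..<n})\<bar> \<le> K2 * (1 / sqrt (real n)) \<and>
         (\<bar>Max ((\<lambda>i. norm (Dphi (hat n \<omega>) (Y i \<omega>))) ` {..<n})\<bar> \<le> K3 * 1 \<and>
         (\<bar>Max ((\<lambda>i. norm (Dpsi (hat n \<omega>) (Y i \<omega>))) ` {..<n})\<bar> \<le> K4 * 1 \<and>
         ((1 / real n) * (\<Sum>i<n. m1 (Y i \<omega>)) \<le> K5 \<and>
         ((1 / real n) * (\<Sum>i<n. m2 (Y i \<omega>)) \<le> K6 \<and>
         ((1 / real n) * (\<Sum>i<n. f8 (Y i \<omega>)) \<le> K7 \<and>
         ((\<forall>i<n. f8 (Y i \<omega>) \<le> (c / 4) * real n) \<and>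
         (\<forall>ij\<in>(UNIV :: ('p \<times> 'p) set).
            \<bar>(1 / real n) * (\<Sum>k<n. Hphi \<theta>0 (Y k \<omega>) $ fst ij $ snd ij) - integral\<^sup>L D (\<lambda>y. Hphi \<theta>0 y $ fst ij $ snd ij)\<bar> \<le> \<eta>9))))))))"
      show "\<bar>CV psi g Y loo n \<omega> - UACV psi g Dpsi Dphi Hphi Y hat n \<omega>\<bar> \<le> Kf * (1 / (real n)^2)"
      proof -
        have n2: "n \<ge> 2" and nNa: "n \<ge> Na" and nNb: "n \<ge> Nb" and nNc: "n \<ge> Nc" and nNd: "n \<ge> Nd"
          using n unfolding N0_def by auto
        have nr: "real n > 0" using n2 by simp
        have sq: "sqrt (real n) > 0" using nr by simp
        define th where "th = hat n \<omega>"
        define lo where "lo i = loo n i \<omega>" for i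
        have ev_1: "\<bar>norm (hat n \<omega> - \<theta>0)\<bar> \<le> K1 * (1 / sqrt (real n))" using ev by blast
        have ev_2: "\<bar>Max ((\<lambda>i. norm (loo n i \<omega> - \<theta>0)) ` {..<n})\<bar> \<le> K2 * (1 / sqrt (real n))" using ev by blast
        have ev_3: "\<bar>Max ((\<lambda>i. norm (Dphi (hat n \<omega>) (Y i \<omega>))) ` {..<n})\<bar> \<le> K3 * 1" using ev by blast
        have ev_4: "\<bar>Max ((\<lambda>i. norm (Dpsi (hat n \<omega>) (Y i \<omega>))) ` {..<n})\<bar> \<le> K4 * 1" using ev by blast
        have a5: "(1 / real n) * (\<Sum>i<n. m1 (Y i \<omega>)) \<le> K5" using ev by blast
        have a6: "(1 / real n) * (\<Sum>i<n. m2 (Y i \<omega>)) \<le> K6" using ev by blast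
        have a7: "(1 / real n) * (\<Sum>i<n. f8 (Y i \<omega>)) \<le> K7" using ev by blast
        have e8: "\<And>i. i < n \<Longrightarrow> f8 (Y i \<omega>) \<le> (c / 4) * real n" using ev by blast
        have e9': "\<forall>ij\<in>(UNIV :: ('p \<times> 'p) set).
            \<bar>(1 / real n) * (\<Sum>k<n. Hphi \<theta>0 (Y k \<omega>) $ fst ij $ snd ij) - integral\<^sup>L D (\<lambda>y. Hphi \<theta>0 y $ fst ij $ snd ij)\<bar> \<le> \<eta>9"
          using ev by blast
        have e9: "\<And>i j. \<bar>(1 / real n) * (\<Sum>k<n. Hphi \<theta>0 (Y k \<omega>) $ i $ j) - integral\<^sup>L D (\<lambda>y. Hphi \<theta>0 y $ i $ j)\<bar> \<le> \<eta>9"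
        proof -
          fix i j :: 'p
          show "\<bar>(1 / real n) * (\<Sum>k<n. Hphi \<theta>0 (Y k \<omega>) $ i $ j) - integral\<^sup>L D (\<lambda>y. Hphi \<theta>0 y $ i $ j)\<bar> \<le> \<eta>9"
            using bspec[OF e9', of "(i, j)"] by simp
        qed
        have ev1: "norm (th - \<theta>0) \<le> K1 / sqrt (real n)" using ev_1 unfolding th_def by simp
        have ev2: "Max ((\<lambda>i. norm (lo i - \<theta>0)) ` {..<n}) \<le> K2 * (1 / sqrt (real n))"
          unfolding lo_def by (rule abs_le_D1[OF ev_2])
        have ev3: "Max ((\<lambda>i. norm (Dphi th (Y i \<omega>))) ` {..<n}) \<le> K3 * 1"
          unfolding th_def by (rule abs_le_D1[OF ev_3])
        have ev4: "Max ((\<lambda>i. norm (Dpsi th (Y i \<omega>))) ` {..<n}) \<le> K4 * 1"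
          unfolding th_def by (rule abs_le_D1[OF ev_4])
        have mx: "\<And>f i. i < n \<Longrightarrow> f i \<le> Max (f ` {..<n})" for f :: "nat \<Rightarrow> real"
          by (rule Max_ge) auto
        have YSw: "\<And>k. Y k \<omega> \<in> space S" using YS w by blast
        have K5: "K5 \<ge> 0"
        proof -
          have "0 \<le> (1 / real n) * (\<Sum>i<n. m1 (Y i \<omega>))" using m1p YSw by (intro mult_nonneg_nonneg sum_nonneg) auto
          then show ?thesis using a5 by linarith
        qed
        have th_rad: "norm (th - \<theta>0) \<le> \<rho> / 2" using ev1 Na[OF nNa] by linarith
        have K2b: "K2 * (1 / sqrt (real n)) = K2 / sqrt (real n)" by simp
        have lo_rad': "\<And>i. i < n \<Longrightarrow> norm (lo i - \<theta>0) \<le> K2 / sqrt (real n)"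
          using order_trans[OF mx ev2] unfolding K2b .
        have lo_rad: "\<And>i. i < n \<Longrightarrow> norm (lo i - \<theta>0) \<le> \<rho> / 2" using lo_rad' Nb[OF nNb] by (meson order_trans)
        have inball: "\<And>x. norm (x - \<theta>0) \<le> \<rho> / 2 \<Longrightarrow> x \<in> ball \<theta>0 \<rho>"
          using \<rho> by (simp add: dist_norm norm_minus_commute)
        have thb: "th \<in> ball \<theta>0 \<rho>" using inball th_rad by blast
        have lob: "\<And>i. i < n \<Longrightarrow> lo i \<in> ball \<theta>0 \<rho>" using inball lo_rad by blast
        have t0b: "\<theta>0 \<in> ball \<theta>0 \<rho>" using \<rho> by simp
        have bD: "\<And>i. i < n \<Longrightarrow> norm (Dphi th (Y i \<omega>)) \<le> K3"
          using order_trans[OF mx ev3] by simp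
        have bV: "\<And>i. i < n \<Longrightarrow> norm (Dpsi th (Y i \<omega>)) \<le> K4"
          using order_trans[OF mx ev4] by simp
        define H where "H = (1 / real n) *\<^sub>R (\<Sum>k<n. Hphi th (Y k \<omega>))"
        define avg0 where "avg0 = (1 / real n) *\<^sub>R (\<Sum>k<n. Hphi \<theta>0 (Y k \<omega>))"
        have Hsplit: "H - E0 = (1 / real n) *\<^sub>R (\<Sum>k<n. Hphi th (Y k \<omega>) - Hphi \<theta>0 (Y k \<omega>)) + (avg0 - E0)"
          unfolding H_def avg0_def by (simp add: sum_subtractf scaleR_diff_right)
        have f1: "fro ((1 / real n) *\<^sub>R (\<Sum>k<n. Hphi th (Y k \<omega>) - Hphi \<theta>0 (Y k \<omega>))) \<le> c0 / 4"
        proof -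
          have "fro ((1 / real n) *\<^sub>R (\<Sum>k<n. Hphi th (Y k \<omega>) - Hphi \<theta>0 (Y k \<omega>)))
              = (1 / real n) * fro (\<Sum>k<n. Hphi th (Y k \<omega>) - Hphi \<theta>0 (Y k \<omega>))" using nr by (simp add: fro_scale)
          also have "\<dots> \<le> (1 / real n) * (\<Sum>k<n. fro (Hphi th (Y k \<omega>) - Hphi \<theta>0 (Y k \<omega>)))"
            using nr by (intro mult_left_mono fro_sum) auto
          also have "\<dots> \<le> (1 / real n) * (\<Sum>k<n. L1 * m1 (Y k \<omega>) * norm (th - \<theta>0))"
            using nr lipH[OF t0b thb YSw] by (intro mult_left_mono sum_mono) auto
          also have "\<dots> = L1 * norm (th - \<theta>0) * ((1 / real n) * (\<Sum>k<n. m1 (Y k \<omega>)))"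
            by (simp add: sum_distrib_left sum_distrib_right ac_simps)
          also have "\<dots> \<le> L1 * norm (th - \<theta>0) * K5" using a5 L1 by (intro mult_left_mono) auto
          also have "\<dots> \<le> L1 * (K1 / sqrt (real n)) * K5" using ev1 L1 K5 by (intro mult_right_mono mult_left_mono) auto
          also have "\<dots> = (L1 * K5 * K1) / sqrt (real n)" by simp
          also have "\<dots> \<le> c0 / 4" by (rule Nc[OF nNc])
          finally show ?thesis .
        qed
        have f2: "fro (avg0 - E0) \<le> c0 / 4"
        proof -
          have "fro (avg0 - E0) \<le> (\<Sum>i\<in>(UNIV::'p set). \<Sum>j\<in>(UNIV::'p set). \<eta>9)"
            unfolding fro_def
          proof (intro sum_mono)
            fix i j :: 'p
            have "(avg0 - E0) $ i $ j = (1 / real n) * (\<Sum>k<n. Hphi \<theta>0 (Y k \<omega>) $ i $ j) - integral\<^sup>L D (\<lambda>y. Hphi \<theta>0 y $ i $ j)"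
              unfolding avg0_def E0_def by (simp add: sum_component)
            then show "\<bar>(avg0 - E0) $ i $ j\<bar> \<le> \<eta>9" using e9[of i j] by simp
          qed
          also have "\<dots> = c0 / 4" unfolding \<eta>9_def P_def using P1 unfolding P_def by (simp add: power2_eq_square)
          finally show ?thesis .
        qed
        have froHE: "fro (H - E0) \<le> c0 / 2" unfolding Hsplit
          using fro_add[of "(1 / real n) *\<^sub>R (\<Sum>k<n. Hphi th (Y k \<omega>) - Hphi \<theta>0 (Y k \<omega>))" "avg0 - E0"] f1 f2 by linarith
        have pdH: "\<And>x. x \<bullet> (H *v x) \<ge> c * (norm x)^2"
        proof -
          fix x :: "real^'p"
          have "x \<bullet> (H *v x) = x \<bullet> (E0 *v x) + x \<bullet> ((H - E0) *v x)"
            by (simp add: matrix_vector_mult_diff_rdistrib inner_diff_right)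
          moreover have "\<bar>x \<bullet> ((H - E0) *v x)\<bar> \<le> fro (H - E0) * norm x * norm x" by (rule quad_bound)
          moreover have "fro (H - E0) * norm x * norm x \<le> (c0 / 2) * (norm x)^2"
          proof -
            have "fro (H - E0) * (norm x * norm x) \<le> (c0 / 2) * (norm x * norm x)"
              using froHE by (intro mult_right_mono) auto
            then show ?thesis by (simp add: power2_eq_square mult.assoc)
          qed
          ultimately show "x \<bullet> (H *v x) \<ge> c * (norm x)^2" using c0(2)[of x] unfolding c_def by linarith
        qed
        have froHk: "\<And>k. k < n \<Longrightarrow> fro (Hphi th (Y k \<omega>)) \<le> f8 (Y k \<omega>)"
        proof -
          fix k
          have "fro (Hphi th (Y k \<omega>)) \<le> fro (Hphi \<theta>0 (Y k \<omega>)) + fro (Hphi th (Y k \<omega>) - Hphi \<theta>0 (Y k \<omega>))"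
            using fro_add[of "Hphi \<theta>0 (Y k \<omega>)" "Hphi th (Y k \<omega>) - Hphi \<theta>0 (Y k \<omega>)"] by simp
          also have "\<dots> \<le> h0 (Y k \<omega>) + L1 * m1 (Y k \<omega>) * norm (th - \<theta>0)"
            using lipH[OF t0b thb YSw] unfolding h0_def by simp
          also have "\<dots> \<le> h0 (Y k \<omega>) + L1 * m1 (Y k \<omega>) * \<rho>"
            using th_rad L1 m1p[OF YSw] \<rho> by (intro add_left_mono mult_left_mono) auto
          finally show "fro (Hphi th (Y k \<omega>)) \<le> f8 (Y k \<omega>)" unfolding f8_def by (simp add: ac_simps)
        qed
        have small: "\<And>i. i < n \<Longrightarrow> L1 * K5 * norm (lo i - th) \<le> c / 4"
        proof -
          fix i assume i: "i < n"
          have "norm (lo i - th) \<le> norm (lo i - \<theta>0) + norm (th - \<theta>0)"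
            using norm_triangle_ineq4[of "lo i - \<theta>0" "th - \<theta>0"] by simp
          also have "\<dots> \<le> K2 / sqrt (real n) + K1 / sqrt (real n)" using lo_rad'[OF i] ev1 by linarith
          finally have "L1 * K5 * norm (lo i - th) \<le> L1 * K5 * (K2 / sqrt (real n) + K1 / sqrt (real n))"
            using L1 K5 by (intro mult_left_mono) auto
          also have "\<dots> = (L1 * K5 * (K1 + K2)) / sqrt (real n)" by (simp add: add_divide_distrib[symmetric] algebra_simps)
          also have "\<dots> \<le> c / 4" by (rule Nd[OF nNd])
          finally show "L1 * K5 * norm (lo i - th) \<le> c / 4" .
        qed
        have DB: "\<bar>(1 / real n) * (\<Sum>i<n. psi (g (lo i)) (Y i \<omega>)) -
          ((1 / real n) * (\<Sum>i<n. psi (g th) (Y i \<omega>)) +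
           trace (matrix_inv H ** (\<chi> a b. (1 / real n) * (\<Sum>i<n. Dpsi th (Y i \<omega>) $ a * ((1 / (real n - 1)) *\<^sub>R Dphi th (Y i \<omega>)) $ b))))\<bar>
         \<le> Kf * (1 / (real n)^2)"
          unfolding Kf_def H_def
        proof (rule det_bound[where Yk="\<lambda>k. Y k \<omega>" and th=th and lo=lo and n=n])
          show "2 \<le> n" by (rule n2)
          show "(\<Sum>k<n. Dphi th (Y k \<omega>)) = 0" unfolding th_def by (rule gz_hat[OF n2 w])
          show "\<And>i. i < n \<Longrightarrow> (\<Sum>k\<in>{..<n} - {i}. Dphi (lo i) (Y k \<omega>)) = 0" unfolding lo_def using gz_loo n2 w by blast
          show "\<And>i k. i < n \<Longrightarrow> k < n \<Longrightarrow>
            norm (Dphi (lo i) (Y k \<omega>) - Dphi th (Y k \<omega>) - Hphi th (Y k \<omega>) *v (lo i - th)) \<le> L1 * m1 (Y k \<omega>) * (norm (lo i - th))^2"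
            using remH thb lob YSw by blast
          show "\<And>i. i < n \<Longrightarrow> \<bar>psi (g (lo i)) (Y i \<omega>) - psi (g th) (Y i \<omega>) - Dpsi th (Y i \<omega>) \<bullet> (lo i - th)\<bar> \<le> Q * m2 (Y i \<omega>) * (norm (lo i - th))^2"
            unfolding Q_def using remV thb lob YSw by (simp add: ac_simps)
          show "\<And>k. k < n \<Longrightarrow> transpose (Hphi th (Y k \<omega>)) = Hphi th (Y k \<omega>)"
            unfolding th_def using symH hat_in[OF n2 w] YSw by blast
          show "c > 0" by (rule c)
          show "\<And>x. x \<bullet> (((1 / real n) *\<^sub>R (\<Sum>k<n. Hphi th (Y k \<omega>))) *v x) \<ge> c * (norm x)^2"
            using pdH unfolding H_def .
          show "\<And>k. k < n \<Longrightarrow> fro (Hphi th (Y k \<omega>)) \<le> f8 (Y k \<omega>)" by (rule froHk)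
          show "\<And>k. k < n \<Longrightarrow> f8 (Y k \<omega>) \<le> (c / 4) * real n" by (rule e8)
          show "\<And>i. i < n \<Longrightarrow> norm (Dphi th (Y i \<omega>)) \<le> K3" by (rule bD)
          show "\<And>i. i < n \<Longrightarrow> norm (Dpsi th (Y i \<omega>)) \<le> K4" by (rule bV)
          show "(1 / real n) * (\<Sum>k<n. m1 (Y k \<omega>)) \<le> K5" by (rule a5)
          show "(1 / real n) * (\<Sum>k<n. m2 (Y k \<omega>)) \<le> K6" by (rule a6)
          show "(1 / real n) * (\<Sum>k<n. f8 (Y k \<omega>)) \<le> K7" by (rule a7)
          show "\<And>k. m1 (Y k \<omega>) \<ge> 0" using m1p YSw by blast
          show "\<And>k. m2 (Y k \<omega>) \<ge> 0" using m2p YSw by blast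
          show "\<And>i. i < n \<Longrightarrow> L1 * K5 * norm (lo i - th) \<le> c / 4" by (rule small)
          show "Q \<ge> 0" unfolding Q_def by simp
          show "L1 \<ge> 0" by (rule L1)
        qed
        have "CV psi g Y loo n \<omega> - UACV psi g Dpsi Dphi Hphi Y hat n \<omega> =
          (1 / real n) * (\<Sum>i<n. psi (g (lo i)) (Y i \<omega>)) -
          ((1 / real n) * (\<Sum>i<n. psi (g th) (Y i \<omega>)) +
           trace (matrix_inv H ** (\<chi> a b. (1 / real n) * (\<Sum>i<n. Dpsi th (Y i \<omega>) $ a * ((1 / (real n - 1)) *\<^sub>R Dphi th (Y i \<omega>)) $ b))))"
          unfolding CV_def UACV_def Let_def th_def lo_def H_def by simp
        then show ?thesis using DB by simp
      qed
    qed
  qed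
qed

end
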